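(* Let $\Phi:(0,\infty)\to\mathbb C$ be measurable, let $c\in(-1,0)$, assume $D_0:=\int_0^\infty \Phi(y)\,y^{-1}\,dy$ is finite and nonzero, and assume $$\int_0^\infty|\Phi(y)|\,y^{-c-1}\,dy<\infty.$$ Let $F(s)=\int_0^\infty y^{s-1}\Phi(y)\,dy$ wherever absolutely convergent, let $\mathcal K(s)=-\frac{\pi}{2}\frac{\Gamma(s+1)}{\sin(\pi s/2)}$, let $\Xi(z)=z\int_0^\infty\frac{e^{-zt}}{1+t^2}dt$ ($z>0$), and $S(\mu)=\frac1{D_0}\int_0^\infty\frac{\Phi(y)}{y}\Xi(\mu y)\,dy$. Then $F(-s)$ converges absolutely on the line $\Re s=c$, the integral $\int_{(c)}\mathcal K(s)F(-s)\mu^{-s}\,ds$ converges absolutely for every $\mu>0$, and $$S(\mu)=\frac{1}{2\pi i D_0}\int_{(c)}\mathcal K(s)F(-s)\mu^{-s}\,ds\qquad(\mu>0).$$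
   Context: $\int_{(c)}$ denotes integration upward along the vertical line $\Re s=c$. *)

theory Defs
  imports "HOL-Analysis.Analysis"
begin

definition mellin_abs_conv :: "(real \<Rightarrow> complex) \<Rightarrow> complex \<Rightarrow> bool" where
  "mellin_abs_conv \<Phi> s \<longleftrightarrow>
     set_integrable lborel {0<..} (\<lambda>y. (complex_of_real y) powr (s - 1) * \<Phi> y)"

definition mellin :: "(real \<Rightarrow> complex) \<Rightarrow> complex \<Rightarrow> complex" where
  "mellin \<Phi> s = (LINT y:{0<..}|lborel. (complex_of_real y) powr (s - 1) * \<Phi> y)"

definition Kker :: "complex \<Rightarrow> complex" where
  "Kker s = - (of_real pi / 2) * Gamma (s + 1) / sin (of_real pi * s / 2)"

definition Xi :: "real \<Rightarrow> real" where
  "Xi z = z * (LBINT t:{0<..}. exp (- z * t) / (1 + t\<^sup>2))"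

definition D0 :: "(real \<Rightarrow> complex) \<Rightarrow> complex" where
  "D0 \<Phi> = (LINT y:{0<..}|lborel. \<Phi> y / complex_of_real y)"

definition Sfun :: "(real \<Rightarrow> complex) \<Rightarrow> real \<Rightarrow> complex" where
  "Sfun \<Phi> \<mu> = (1 / D0 \<Phi>) *
     (LINT y:{0<..}|lborel. \<Phi> y / complex_of_real y * complex_of_real (Xi (\<mu> * y)))"

text \<open>Integration upward along the vertical line Re s = c, parametrised s = c + i t,
  ds = i dt: absolute convergence and value.\<close>
definition vline_integrable :: "(complex \<Rightarrow> complex) \<Rightarrow> real \<Rightarrow> bool" where
  "vline_integrable g c \<longleftrightarrow> integrable lborel (\<lambda>t. g (Complex c t))"

definition vline_integral :: "(complex \<Rightarrow> complex) \<Rightarrow> real \<Rightarrow> complex" where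
  "vline_integral g c = \<i> * (\<integral>t. g (Complex c t) \<partial>lborel)"

end

theory Submission
  imports Defs "HOL-Probability.Probability"
begin


lemma cpow_pos: "x > 0 \<Longrightarrow> (complex_of_real x) powr s = exp (s * of_real (ln x))"
  by (simp add: powr_def Ln_of_real)

lemma norm_cpow_pos: "x > 0 \<Longrightarrow> norm ((complex_of_real x) powr s) = x powr (Re s)"
  by (simp add: cpow_pos norm_exp_eq_Re powr_def)

lemma set_integrable_lebesgue_lborel:
  fixes f :: "real \<Rightarrow> 'b::{banach,second_countable_topology}"
  assumes "set_integrable lebesgue S f" "set_borel_measurable lborel S f"
  shows "set_integrable lborel S f"
  using assms unfolding set_integrable_def set_borel_measurable_def
  using integrable_completion by blast

lemma ind_cpow: "indicator {0<..} x *\<^sub>R (complex_of_real x powr s * g x) =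
   indicator {0<..} x *\<^sub>R (exp (s * of_real (ln x)) * g x)"
  by (cases "x > 0") (auto simp: cpow_pos indicator_def)

lemma sbm_cpow:
  assumes "g \<in> borel_measurable borel"
  shows "set_borel_measurable lborel {0<..} (\<lambda>x. complex_of_real x powr s * g x)"
  unfolding set_borel_measurable_def ind_cpow using assms by measurable

lemma ind_scale_cmult: "indicator A x *\<^sub>R ((C::complex) * g x) = C * (indicator A x *\<^sub>R g x)"
  by (simp add: indicator_def)

lemma Gamma_scaled:
  fixes w :: complex and r :: real
  assumes w: "Re w > 0" and r: "r > 0"
  shows "set_integrable lborel {0<..} (\<lambda>u. of_real u powr (w - 1) * of_real (exp (- (r * u))))"
    and "(LINT u:{0<..}|lborel. of_real u powr (w - 1) * of_real (exp (- (r * u)))) = Gamma w / of_real r powr w"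
proof -
  have eq: "\<And>a u. of_real u powr (w - 1) / of_real (exp (a * u)) = of_real u powr (w - 1) * complex_of_real (exp (- (a * u)))"
    by (simp add: exp_minus field_simps)
  have meas: "\<And>a. set_borel_measurable lborel {0<..} (\<lambda>u. of_real u powr (w - 1) * complex_of_real (exp (- (a * u))))"
    by (rule sbm_cpow) measurable
  have "set_integrable lebesgue {0<..} (\<lambda>u. of_real u powr (w - 1) * of_real (exp (- (r * u))))"
    using absolutely_integrable_Gamma_integral[OF w r] unfolding eq .
  then show int: "set_integrable lborel {0<..} (\<lambda>u. of_real u powr (w - 1) * of_real (exp (- (r * u))))"
    using set_integrable_lebesgue_lborel meas by blast
  have int1: "set_integrable lebesgue {0<..} (\<lambda>u. of_real u powr (w - 1) * of_real (exp (- (1 * u))))"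
    using absolutely_integrable_Gamma_integral[OF w zero_less_one] unfolding eq .
  have "((\<lambda>u. of_real u powr (w - 1) * of_real (exp (- (1 * u)))) has_integral Gamma w) {0<..}"
  proof -
    have "(\<lambda>t. complex_of_real t powr (w - 1) / complex_of_real (exp t)) = (\<lambda>u. of_real u powr (w - 1) * of_real (exp (- (1 * u))))"
      by (rule ext) (simp add: exp_minus field_simps)
    then show ?thesis using Gamma_integral_complex'[OF w] by simp
  qed
  then have v1: "(LINT u:{0<..}|lebesgue. of_real u powr (w - 1) * of_real (exp (- (1 * u)))) = Gamma w"
    using set_lebesgue_integral_eq_integral(2)[OF int1] by (simp add: integral_unique)
  define f where "f = (\<lambda>u. indicator {0<..} u *\<^sub>R (of_real u powr (w - 1) * complex_of_real (exp (- (1 * u)))))"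
  have fm: "f \<in> borel_measurable lborel"
    using meas[of 1] unfolding f_def set_borel_measurable_def .
  have "integral\<^sup>L lborel f = Gamma w"
    using v1 integral_completion[OF fm] unfolding f_def set_lebesgue_integral_def by simp
  moreover have "integral\<^sup>L lborel f = \<bar>r\<bar> *\<^sub>R (LBINT x. f (0 + r * x))"
    by (rule lborel_integral_real_affine) (use r in auto)
  moreover have fx: "f (0 + r * x) = (of_real r powr (w - 1)) * (indicator {0<..} x *\<^sub>R (of_real x powr (w - 1) * complex_of_real (exp (- (r * x)))))" for x
    using r by (cases "x > 0") (auto simp: f_def indicator_def cpow_pos zero_less_mult_iff ln_mult distrib_left exp_add simp del: of_real_mult)
  have "(LBINT x. f (0 + r * x)) = (of_real r powr (w - 1)) * (LINT u:{0<..}|lborel. of_real u powr (w - 1) * of_real (exp (- (r * u))))"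
    unfolding fx set_lebesgue_integral_def by (rule integral_mult_right_zero)
  ultimately have "Gamma w = r *\<^sub>R (of_real r powr (w - 1) * (LINT u:{0<..}|lborel. of_real u powr (w - 1) * of_real (exp (- (r * u)))))"
    using r by simp
  moreover have "of_real r * of_real r powr (w - 1) = complex_of_real r powr w"
  proof -
    have e: "complex_of_real r = exp (of_real (ln r))" using r by (simp add: exp_of_real)
    show ?thesis unfolding cpow_pos[OF r] by (subst e) (simp add: exp_add[symmetric] algebra_simps)
  qed
  ultimately show "(LINT u:{0<..}|lborel. of_real u powr (w - 1) * of_real (exp (- (r * u)))) = Gamma w / of_real r powr w"
    using r by (simp add: scaleR_conv_of_real field_simps)
qed

lemma cpow_real_measurable[measurable]: "(\<lambda>x::real. complex_of_real x powr s) \<in> borel_measurable borel"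
proof -
  have "(\<lambda>x::real. complex_of_real x powr s) = (\<lambda>x. if x = 0 then 0 else exp (s * (of_real (ln \<bar>x\<bar>) + (if x < 0 then pi else 0) * \<i>)))"
    by (rule ext) (simp add: powr_def Ln_of_real')
  also have "\<dots> \<in> borel_measurable borel" by measurable
  finally show ?thesis .
qed

lemma Gamma_scaled_real:
  fixes \<sigma> r :: real
  assumes s: "\<sigma> > 0" and r: "r > 0"
  shows "set_integrable lborel {0<..} (\<lambda>u. u powr (\<sigma> - 1) * exp (- (r * u)))"
    and "(LBINT u:{0<..}. u powr (\<sigma> - 1) * exp (- (r * u))) = Gamma \<sigma> / r powr \<sigma>"
proof -
  have eq: "indicator {0<..} u *\<^sub>R (of_real u powr (of_real \<sigma> - 1) * complex_of_real (exp (- (r * u))))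
      = complex_of_real (indicator {0<..} u *\<^sub>R (u powr (\<sigma> - 1) * exp (- (r * u))))" for u
  proof (cases "u > 0")
    case True
    have "of_real u powr (of_real \<sigma> - 1) = complex_of_real (u powr (\<sigma> - 1))"
      using powr_of_real[of u "\<sigma> - 1"] True by simp
    then show ?thesis using True by (simp add: exp_of_real)
  qed simp
  note G = Gamma_scaled[of "of_real \<sigma>" r, simplified, OF s r]
  show "set_integrable lborel {0<..} (\<lambda>u. u powr (\<sigma> - 1) * exp (- (r * u)))"
    using G(1) unfolding set_integrable_def eq complex_of_real_integrable_eq .
  have "complex_of_real (LBINT u:{0<..}. u powr (\<sigma> - 1) * exp (- (r * u))) = Gamma (of_real \<sigma>) / of_real r powr of_real \<sigma>"
    using G(2) unfolding set_lebesgue_integral_def eq integral_complex_of_real .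
  also have "\<dots> = complex_of_real (Gamma \<sigma> / r powr \<sigma>)"
    using r by (simp add: Gamma_complex_of_real powr_of_real)
  finally show "(LBINT u:{0<..}. u powr (\<sigma> - 1) * exp (- (r * u))) = Gamma \<sigma> / r powr \<sigma>"
    by (simp only: of_real_eq_iff)
qed

lemma fubini_pos:
  fixes f :: "real \<Rightarrow> real \<Rightarrow> complex"
  assumes meas: "(\<lambda>p. f (fst p) (snd p)) \<in> borel_measurable (lborel \<Otimes>\<^sub>M lborel)"
    and inner: "\<And>x. x > 0 \<Longrightarrow> set_integrable lborel {0<..} (f x)"
    and nrm: "set_integrable lborel {0<..} (\<lambda>x. LBINT y:{0<..}. norm (f x y))"
  shows "set_integrable lborel {0<..} (\<lambda>y. LINT x:{0<..}|lborel. f x y)"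
    and "(LINT y:{0<..}|lborel. LINT x:{0<..}|lborel. f x y) = (LINT x:{0<..}|lborel. LINT y:{0<..}|lborel. f x y)"
proof -
  define F where "F x y = indicator {0<..} x *\<^sub>R indicator {0<..} y *\<^sub>R f x y" for x y
  have Fm: "(\<lambda>(x, y). F x y) \<in> borel_measurable (lborel \<Otimes>\<^sub>M lborel)"
    unfolding F_def split_beta using meas by measurable
  have int: "integrable (lborel \<Otimes>\<^sub>M lborel) (\<lambda>(x, y). F x y)"
  proof (rule lborel_pair.Fubini_integrable)
    show "(\<lambda>(x, y). F x y) \<in> borel_measurable (lborel \<Otimes>\<^sub>M lborel)" by (fact Fm)
    have "(\<lambda>x. LBINT y. norm (case (x, y) of (x, y) \<Rightarrow> F x y)) = (\<lambda>x. indicator {0<..} x *\<^sub>R (LBINT y:{0<..}. norm (f x y)))"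
      by (rule ext) (auto simp: F_def set_lebesgue_integral_def indicator_def)
    then show "integrable lborel (\<lambda>x. LBINT y. norm (case (x, y) of (x, y) \<Rightarrow> F x y))"
      using nrm unfolding set_integrable_def by simp
    show "AE x in lborel. integrable lborel (\<lambda>y. case (x, y) of (x, y) \<Rightarrow> F x y)"
    proof (rule AE_I2)
      fix x :: real
      show "integrable lborel (\<lambda>y. case (x, y) of (x, y) \<Rightarrow> F x y)"
      proof (cases "x > 0")
        case True
        then show ?thesis using inner[OF True] unfolding set_integrable_def F_def by simp
      next
        case False
        then show ?thesis by (simp add: F_def)
      qed
    qed
  qed
  have e1: "(LBINT x. F x y) = indicator {0<..} y *\<^sub>R (LINT x:{0<..}|lborel. f x y)" for y
    by (cases "y > 0") (auto simp: F_def set_lebesgue_integral_def)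
  have e2: "(LBINT y. F x y) = indicator {0<..} x *\<^sub>R (LINT y:{0<..}|lborel. f x y)" for x
    by (cases "x > 0") (auto simp: F_def set_lebesgue_integral_def)
  show "set_integrable lborel {0<..} (\<lambda>y. LINT x:{0<..}|lborel. f x y)"
    using lborel_pair.integrable_snd[OF int] unfolding e1 set_integrable_def .
  show "(LINT y:{0<..}|lborel. LINT x:{0<..}|lborel. f x y) = (LINT x:{0<..}|lborel. LINT y:{0<..}|lborel. f x y)"
    using lborel_pair.Fubini_integral[OF int] unfolding e1 e2 set_lebesgue_integral_def .
qed


lemma cpow_pos_zero: "x > 0 \<Longrightarrow> (complex_of_real x) powr 0 = 1"
  by (simp add: cpow_pos)

lemma exp_int:
  assumes a: "a > 0"
  shows "set_integrable lborel {0<..} (\<lambda>r. complex_of_real (exp (- (a * r))))"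
    and "(LINT r:{0<..}|lborel. complex_of_real (exp (- (a * r)))) = 1 / of_real a"
proof -
  have eq: "set_integrable lborel {0<..} (\<lambda>r. of_real r powr (1 - 1) * complex_of_real (exp (- (a * r))))
     = set_integrable lborel {0<..} (\<lambda>r. complex_of_real (exp (- (a * r))))"
    by (rule set_integrable_cong) (auto simp: cpow_pos_zero)
  show "set_integrable lborel {0<..} (\<lambda>r. complex_of_real (exp (- (a * r))))"
    using Gamma_scaled(1)[of 1 a] a eq by simp
  have "(LINT r:{0<..}|lborel. complex_of_real (exp (- (a * r)))) =
        (LINT r:{0<..}|lborel. of_real r powr (1 - 1) * complex_of_real (exp (- (a * r))))"
    by (rule set_lebesgue_integral_cong) (auto simp: cpow_pos_zero)
  also have "\<dots> = 1 / of_real a"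
    using Gamma_scaled(2)[of 1 a] a by (simp add: cpow_pos)
  finally show "(LINT r:{0<..}|lborel. complex_of_real (exp (- (a * r)))) = 1 / of_real a" .
qed

lemma Beta_like:
  fixes b :: complex
  assumes b0: "0 < Re b" and b1: "Re b < 1"
  shows "set_integrable lborel {0<..} (\<lambda>u. of_real u powr (b - 1) / of_real (1 + u))"
    and "(LINT u:{0<..}|lborel. of_real u powr (b - 1) / of_real (1 + u)) = of_real pi / sin (of_real pi * b)"
proof -
  define \<beta> where "\<beta> = Re b"
  define f where "f r u = of_real u powr (b - 1) * complex_of_real (exp (- (r * u)) * exp (- r))" for r u :: real
  have meas: "(\<lambda>p. f (fst p) (snd p)) \<in> borel_measurable (lborel \<Otimes>\<^sub>M lborel)"
    unfolding f_def by measurable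
  have inner: "set_integrable lborel {0<..} (f r)" if r: "r > 0" for r
  proof -
    have "set_integrable lborel {0<..} (\<lambda>u. (of_real u powr (b - 1) * of_real (exp (- (r * u)))) * complex_of_real (exp (-r)))"
      using Gamma_scaled(1)[OF b0 r] by (intro set_integrable_mult_left) auto
    then show ?thesis unfolding f_def by (simp add: mult.assoc)
  qed
  have nrm_eq: "(LBINT u:{0<..}. norm (f r u)) = Gamma \<beta> * (r powr ((1 - \<beta>) - 1) * exp (- (1 * r)))" if r: "r > 0" for r
  proof -
    have "(LBINT u:{0<..}. norm (f r u)) = (LBINT u:{0<..}. (u powr (\<beta> - 1) * exp (- (r * u))) * exp (-r))"
      by (rule set_lebesgue_integral_cong) (auto simp: f_def norm_mult norm_cpow_pos \<beta>_def)
    also have "\<dots> = (Gamma \<beta> / r powr \<beta>) * exp (-r)"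
      using Gamma_scaled_real(2)[of \<beta> r] r b0 unfolding \<beta>_def by simp
    also have "\<dots> = Gamma \<beta> * (r powr ((1 - \<beta>) - 1) * exp (- (1 * r)))"
      using r by (simp add: powr_minus divide_simps)
    finally show ?thesis .
  qed
  have nrm: "set_integrable lborel {0<..} (\<lambda>r. LBINT u:{0<..}. norm (f r u))"
  proof -
    have "set_integrable lborel {0<..} (\<lambda>r. Gamma \<beta> * (r powr ((1 - \<beta>) - 1) * exp (- (1 * r))))"
      using Gamma_scaled_real(1)[of "1-\<beta>" 1] b1 by (intro set_integrable_mult_right) (auto simp: \<beta>_def)
    moreover have "set_integrable lborel {0<..} (\<lambda>r. Gamma \<beta> * (r powr ((1 - \<beta>) - 1) * exp (- (1 * r))))
        = set_integrable lborel {0<..} (\<lambda>r. LBINT u:{0<..}. norm (f r u))"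
      by (rule set_integrable_cong) (auto simp: nrm_eq)
    ultimately show ?thesis by simp
  qed
  note FB = fubini_pos[OF meas inner nrm]
  have in_r: "(LINT r:{0<..}|lborel. f r u) = of_real u powr (b - 1) / of_real (1 + u)" if u: "u > 0" for u
  proof -
    have ee: "exp (- (r * u)) * exp (- r) = exp (- ((1 + u) * r))" for r
      by (simp add: mult_exp_exp algebra_simps)
    have "(LINT r:{0<..}|lborel. f r u) = (LINT r:{0<..}|lborel. of_real u powr (b - 1) * complex_of_real (exp (- ((1 + u) * r))))"
      unfolding f_def ee ..
    also have "\<dots> = of_real u powr (b - 1) * (1 / of_real (1 + u))"
      using exp_int(2)[of "1 + u"] u by simp
    finally show ?thesis by simp
  qed
  have in_u: "(LINT u:{0<..}|lborel. f r u) = Gamma b * (of_real r powr ((1 - b) - 1) * complex_of_real (exp (- (1 * r))))" if r: "r > 0" for r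
  proof -
    have "(LINT u:{0<..}|lborel. f r u) = (LINT u:{0<..}|lborel. (of_real u powr (b - 1) * of_real (exp (- (r * u)))) * complex_of_real (exp (-r)))"
      unfolding f_def by (simp add: mult.assoc)
    also have "\<dots> = Gamma b / of_real r powr b * complex_of_real (exp (-r))"
      using Gamma_scaled(2)[OF b0 r] by simp
    also have "\<dots> = Gamma b * (of_real r powr ((1 - b) - 1) * complex_of_real (exp (- (1 * r))))"
      using r by (simp add: cpow_pos exp_minus field_simps)
    finally show ?thesis .
  qed
  have "set_integrable lborel {0<..} (\<lambda>u. LINT r:{0<..}|lborel. f r u) =
        set_integrable lborel {0<..} (\<lambda>u. of_real u powr (b - 1) / of_real (1 + u))"
    by (rule set_integrable_cong) (auto simp: in_r)
  then show "set_integrable lborel {0<..} (\<lambda>u. of_real u powr (b - 1) / of_real (1 + u))"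
    using FB(1) by simp
  have "(LINT u:{0<..}|lborel. of_real u powr (b - 1) / of_real (1 + u)) = (LINT u:{0<..}|lborel. LINT r:{0<..}|lborel. f r u)"
    by (rule set_lebesgue_integral_cong) (auto simp: in_r)
  also have "\<dots> = (LINT r:{0<..}|lborel. LINT u:{0<..}|lborel. f r u)" by (rule FB(2))
  also have "\<dots> = (LINT r:{0<..}|lborel. Gamma b * (of_real r powr ((1 - b) - 1) * complex_of_real (exp (- (1 * r)))))"
    by (rule set_lebesgue_integral_cong) (auto simp: in_u)
  also have "\<dots> = Gamma b * Gamma (1 - b)"
    using Gamma_scaled(2)[of "1 - b" 1] b1 by (simp add: cpow_pos)
  also have "\<dots> = of_real pi / sin (of_real pi * b)"
    by (rule Gamma_reflection_complex)
  finally show "(LINT u:{0<..}|lborel. of_real u powr (b - 1) / of_real (1 + u)) = of_real pi / sin (of_real pi * b)" .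
qed


lemma einterval_0_inf: "einterval 0 \<infinity> = {0::real<..}"
  by (simp add: zero_ereal_def)

lemma norm_of_real_1psq: "norm (complex_of_real (1 + t^2)) = 1 + t^2"
  by (simp only: norm_of_real) simp

lemma one_plus_sq_ne0[simp]: "1 + (x::real)^2 \<noteq> 0"
  by (smt (verit) zero_le_power2)

lemma Mellin_q:
  fixes a :: complex
  assumes a0: "0 < Re a" and a2: "Re a < 2"
  shows "set_integrable lborel {0<..} (\<lambda>t. of_real t powr (a - 1) / of_real (1 + t^2))"
    and "(LINT t:{0<..}|lborel. of_real t powr (a - 1) / of_real (1 + t^2)) = of_real pi / 2 / sin (of_real pi * a / 2)"
proof -
  define b where "b = a / 2"
  have b0: "0 < Re b" "Re b < 1" using a0 a2 by (auto simp: b_def)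
  define f where "f u = of_real u powr (b - 1) / complex_of_real (1 + u)" for u :: real
  note BL = Beta_like[OF b0, folded f_def]
  have key: "(2 * t) *\<^sub>R f (t^2) = 2 * (of_real t powr (a - 1) / of_real (1 + t^2))" if t: "t > 0" for t
  proof -
    have e: "complex_of_real t = exp (of_real (ln t))" using t by (simp add: exp_of_real)
    have c2: "complex_of_real (t^2) powr (b - 1) = exp ((b-1) * of_real (ln (t^2)))"
      by (rule cpow_pos) (use t in simp)
    have "(2 * t) *\<^sub>R f (t^2) = 2 * (of_real t * exp ((b - 1) * of_real (2 * ln t))) / of_real (1 + t^2)"
      unfolding f_def c2 using t by (simp add: ln_realpow scaleR_conv_of_real del: of_real_power)
    also have "of_real t * exp ((b - 1) * of_real (2 * ln t)) = of_real t powr (a - 1)"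
      unfolding cpow_pos[OF t] by (subst e) (simp add: exp_add[symmetric] b_def algebra_simps)
    finally show ?thesis by simp
  qed
  define h where "h t = of_real t powr (a - 1) / complex_of_real (1 + t^2)" for t :: real
  define F where "F t = t powr (Re a - 1) / (1 + t^2)" for t :: real
  have normh: "norm (h t) = F t" if "t > 0" for t
    using that by (simp add: h_def F_def norm_divide norm_cpow_pos norm_of_real_1psq del: of_real_add of_real_power)
  have Fint: "set_integrable lborel {0<..} F"
  proof -
    have nf: "set_integrable lborel {0<..} (\<lambda>u. norm (f u))"
      using BL(1) by (rule set_integrable_norm)
    have eqF: "F (sqrt x) * (inverse (sqrt x) / 2) = (1/2) * norm (f x)" if x: "x > 0" for x
    proof -
      have ee: "(Re a - 1) / 2 - 1 / 2 = Re a / 2 - 1" by (simp add: field_simps)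
      have "sqrt x powr (Re a - 1) * inverse (sqrt x) = x powr (Re b - 1)"
        using x by (simp add: powr_half_sqrt[symmetric] powr_powr b_def powr_minus[symmetric] powr_add[symmetric] ee)
      then show ?thesis using x by (simp add: F_def f_def norm_divide norm_cpow_pos field_simps norm_of_real del: of_real_add)
    qed
    have i2: "set_integrable lborel (einterval 0 \<infinity>) (\<lambda>x. F (sqrt x) * (inverse (sqrt x) / 2))"
    proof -
      have "set_integrable lborel {0<..} (\<lambda>x. (1/2) * norm (f x))"
        using nf by (intro set_integrable_mult_right) auto
      moreover have "set_integrable lborel {0<..} (\<lambda>x. (1/2) * norm (f x)) = set_integrable lborel {0<..} (\<lambda>x. F (sqrt x) * (inverse (sqrt x) / 2))"
        by (rule set_integrable_cong) (use eqF in force)+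
      ultimately show ?thesis unfolding einterval_0_inf by simp
    qed
    have "set_integrable lborel (einterval 0 \<infinity>) F"
    proof (rule interval_integral_substitution_nonneg(1)[where g = sqrt and g' = "\<lambda>x. inverse (sqrt x) / 2" and a = 0 and b = \<infinity>])
      show "(0::ereal) < \<infinity>" by simp
      show "DERIV sqrt x :> inverse (sqrt x) / 2" if "0 < ereal x" "ereal x < \<infinity>" for x
        using that by (intro DERIV_real_sqrt) (simp add: zero_ereal_def)
      show "isCont F (sqrt x)" if "0 < ereal x" "ereal x < \<infinity>" for x
        using that unfolding F_def by (intro continuous_intros) (auto simp: zero_ereal_def)
      show "isCont (\<lambda>x. inverse (sqrt x) / 2) x" if "0 < ereal x" "ereal x < \<infinity>" for x
        using that by (intro continuous_intros) (auto simp: zero_ereal_def)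
      show "0 \<le> F (sqrt x)" if "0 < ereal x" "ereal x < \<infinity>" for x
        unfolding F_def by simp
      show "0 \<le> inverse (sqrt x) / 2" if "0 \<le> ereal x" "ereal x \<le> \<infinity>" for x
        using that by (simp add: zero_ereal_def)
      show "((ereal \<circ> sqrt \<circ> real_of_ereal) \<longlongrightarrow> 0) (at_right 0)"
        unfolding zero_ereal_def comp_assoc[symmetric] ereal_tendsto_simps
        by (auto intro!: tendsto_eq_intros tendsto_real_sqrt intro: tendsto_within_subset)
      show "((ereal \<circ> sqrt \<circ> real_of_ereal) \<longlongrightarrow> \<infinity>) (at_left \<infinity>)"
        unfolding comp_assoc[symmetric] ereal_tendsto_simps by (rule sqrt_at_top)
      show "set_integrable lborel (einterval 0 \<infinity>) (\<lambda>x. F (sqrt x) * (inverse (sqrt x) / 2))"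
        by (fact i2)
    qed
    then show ?thesis unfolding einterval_0_inf .
  qed
  have hint: "set_integrable lborel {0<..} h"
  proof (rule set_integrable_bound[OF Fint])
    show "set_borel_measurable lborel {0<..} h"
      unfolding h_def set_borel_measurable_def by measurable
    show "AE x in lborel. x \<in> {0<..} \<longrightarrow> norm (h x) \<le> norm (F x)"
      by (rule AE_I2) (auto simp: normh F_def)
  qed
  then show "set_integrable lborel {0<..} (\<lambda>t. of_real t powr (a - 1) / of_real (1 + t^2))"
    unfolding h_def .
  have "(LBINT x=0..\<infinity>. f x) = (LBINT x=0..\<infinity>. (2 * x) *\<^sub>R f (x^2))"
  proof (rule interval_integral_substitution_integrable[where g = "\<lambda>x. x^2" and g' = "\<lambda>x. 2 * x"])
    show "(0::ereal) < \<infinity>" by simp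
    show "DERIV (\<lambda>x. x^2) x :> 2 * x" for x
      by (auto intro!: derivative_eq_intros)
    show "isCont f (x^2)" if "0 < ereal x" "ereal x < \<infinity>" for x
      using that unfolding f_def by (intro continuous_intros) (auto simp: zero_ereal_def complex_nonpos_Reals_iff simp del: of_real_add)
    show "isCont (\<lambda>x. 2 * x) x" for x :: real by (intro continuous_intros)
    show "0 \<le> 2 * x" if "0 \<le> ereal x" "ereal x \<le> \<infinity>" for x
      using that by (simp add: zero_ereal_def)
    show "((ereal \<circ> (\<lambda>x. x^2) \<circ> real_of_ereal) \<longlongrightarrow> 0) (at_right 0)"
      unfolding zero_ereal_def comp_assoc[symmetric] ereal_tendsto_simps
      by (auto intro!: tendsto_eq_intros intro: tendsto_within_subset)
    show "((ereal \<circ> (\<lambda>x. x^2) \<circ> real_of_ereal) \<longlongrightarrow> \<infinity>) (at_left \<infinity>)"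
      unfolding comp_assoc[symmetric] ereal_tendsto_simps by (rule filterlim_pow_at_top) (auto intro: filterlim_ident)
    have "set_integrable lborel {0<..} (\<lambda>x. 2 * h x)"
      using hint by (intro set_integrable_mult_right) auto
    moreover have "set_integrable lborel {0<..} (\<lambda>x. 2 * h x) = set_integrable lborel {0<..} (\<lambda>x. (2 * x) *\<^sub>R f (x^2))"
      by (rule set_integrable_cong) (auto simp: key h_def)
    ultimately show "set_integrable lborel (einterval 0 \<infinity>) (\<lambda>x. (2 * x) *\<^sub>R f (x^2))"
      unfolding einterval_0_inf by simp
    show "set_integrable lborel (einterval 0 \<infinity>) f"
      unfolding einterval_0_inf by (fact BL(1))
  qed
  then have "(LINT x:{0<..}|lborel. f x) = (LINT x:{0<..}|lborel. (2 * x) *\<^sub>R f (x^2))"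
    unfolding interval_lebesgue_integral_def einterval_0_inf by simp
  also have "\<dots> = (LINT x:{0<..}|lborel. 2 * h x)"
    by (rule set_lebesgue_integral_cong) (auto simp: key h_def)
  finally have "2 * (LINT x:{0<..}|lborel. h x) = of_real pi / sin (of_real pi * b)"
    using BL(2) by simp
  then have "(LINT x:{0<..}|lborel. h x) = (of_real pi / sin (of_real pi * b)) / 2"
    by (metis nonzero_mult_div_cancel_left zero_neq_numeral)
  also have "\<dots> = of_real pi / 2 / sin (of_real pi * a / 2)"
    unfolding b_def by (simp add: divide_divide_eq_left mult.commute)
  finally show "(LINT t:{0<..}|lborel. of_real t powr (a - 1) / of_real (1 + t^2)) = of_real pi / 2 / sin (of_real pi * a / 2)"
    unfolding h_def .
qed


lemma norm_1psq_c[simp]: "norm (1 + (complex_of_real t)^2) = 1 + t^2"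
  by (metis norm_of_real_1psq of_real_add of_real_1 of_real_power)

lemma cpow_inverse_pos: "x > 0 \<Longrightarrow> 1 / (complex_of_real x powr w) = complex_of_real x powr (- w)"
  by (simp add: cpow_pos exp_minus field_simps)

lemma Mellin_Xi:
  fixes s :: complex
  assumes s1: "-1 < Re s" and s0: "Re s < 0"
  shows "set_integrable lborel {0<..} (\<lambda>z. of_real z powr (s - 1) * of_real (Xi z))"
    and "(LINT z:{0<..}|lborel. of_real z powr (s - 1) * of_real (Xi z)) = Kker s"
proof -
  define f where "f t z = of_real z powr s * complex_of_real (exp (- (z * t)) / (1 + t^2))" for t z :: real
  have meas: "(\<lambda>p. f (fst p) (snd p)) \<in> borel_measurable (lborel \<Otimes>\<^sub>M lborel)"
    unfolding f_def by measurable
  have w: "Re (s + 1) > 0" using s1 by simp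
  have inner_eq: "\<And>t z. f t z = (of_real z powr ((s + 1) - 1) * of_real (exp (- (t * z)))) * (1 / complex_of_real (1 + t^2))"
    by (simp add: f_def mult.commute del: of_real_add of_real_power)
  have inner: "set_integrable lborel {0<..} (f t)" if t: "t > 0" for t
    unfolding inner_eq using Gamma_scaled(1)[OF w t] by (intro set_integrable_mult_left) auto
  have in_z: "(LINT z:{0<..}|lborel. f t z) = Gamma (s + 1) * (of_real t powr (- s - 1) / of_real (1 + t^2))" if t: "t > 0" for t
  proof -
    have "(LINT z:{0<..}|lborel. f t z) = Gamma (s + 1) / of_real t powr (s + 1) * (1 / complex_of_real (1 + t^2))"
      unfolding inner_eq set_integral_mult_left Gamma_scaled(2)[OF w t] ..
    also have "\<dots> = Gamma (s + 1) * ((1 / of_real t powr (s + 1)) / of_real (1 + t^2))"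
      by (simp add: divide_inverse mult_ac del: of_real_add of_real_power)
    also have "\<dots> = Gamma (s + 1) * (of_real t powr (- s - 1) / of_real (1 + t^2))"
    proof -
      have e: "- (s + 1) = - s - 1" by simp
      show ?thesis unfolding cpow_inverse_pos[OF t] e ..
    qed
    finally show ?thesis .
  qed
  have a0: "0 < Re (- s)" and a2: "Re (- s) < 2" using s1 s0 by auto
  note MQ = Mellin_q[OF a0 a2]
  have nrm_eq: "(LBINT z:{0<..}. norm (f t z)) = Gamma (Re s + 1) * norm (of_real t powr (- s - 1) / of_real (1 + t^2))" if t: "t > 0" for t
  proof -
    have "(LBINT z:{0<..}. norm (f t z)) = (LBINT z:{0<..}. (z powr ((Re s + 1) - 1) * exp (- (t * z))) * (1 / (1 + t^2)))"
      by (rule set_lebesgue_integral_cong) (auto simp: f_def norm_mult norm_cpow_pos mult.commute norm_divide norm_of_real_1psq del: of_real_add of_real_power)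
    also have "\<dots> = Gamma (Re s + 1) / t powr (Re s + 1) * (1 / (1 + t^2))"
      using Gamma_scaled_real(2)[of "Re s + 1" t] s1 t by simp
    also have "\<dots> = Gamma (Re s + 1) * norm (of_real t powr (- s - 1) / of_real (1 + t^2))"
    proof -
      have "t powr (- Re s - 1) * (t powr Re s * t) = t powr (- Re s - 1) * t powr (Re s + 1)" using t by (simp add: powr_add)
      also have "\<dots> = 1" using t by (simp add: powr_add[symmetric])
      finally have hh: "t powr (- Re s - 1) * (t powr Re s * t) = 1" .
      show ?thesis using t hh by (simp add: norm_divide norm_cpow_pos norm_of_real_1psq powr_minus divide_simps powr_add del: of_real_add of_real_power)
    qed
    finally show ?thesis .
  qed
  have nrm: "set_integrable lborel {0<..} (\<lambda>t. LBINT z:{0<..}. norm (f t z))"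
  proof -
    have "set_integrable lborel {0<..} (\<lambda>t. Gamma (Re s + 1) * norm (of_real t powr (- s - 1) / of_real (1 + t^2)))"
      using set_integrable_norm[OF MQ(1)] by (intro set_integrable_mult_right) simp
    moreover have "set_integrable lborel {0<..} (\<lambda>t. Gamma (Re s + 1) * norm (of_real t powr (- s - 1) / of_real (1 + t^2)))
        = set_integrable lborel {0<..} (\<lambda>t. LBINT z:{0<..}. norm (f t z))"
      by (rule set_integrable_cong) (auto simp: nrm_eq)
    ultimately show ?thesis by simp
  qed
  note FB = fubini_pos[OF meas inner nrm]
  have in_t: "(LINT t:{0<..}|lborel. f t z) = of_real z powr (s - 1) * of_real (Xi z)" if z: "z > 0" for z
  proof -
    have "(LINT t:{0<..}|lborel. f t z) = of_real z powr s * complex_of_real (LBINT t:{0<..}. exp (- (z * t)) / (1 + t^2))"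
      unfolding f_def set_integral_mult_right set_integral_complex_of_real ..
    also have "\<dots> = of_real z powr s / of_real z * of_real (Xi z)"
      using z by (simp add: Xi_def)
    also have "of_real z powr s / of_real z = of_real z powr (s - 1)"
    proof -
      have e: "complex_of_real z = exp (of_real (ln z))" using z by (simp add: exp_of_real)
      show ?thesis unfolding cpow_pos[OF z] by (subst e) (simp add: exp_diff[symmetric] algebra_simps)
    qed
    finally show ?thesis .
  qed
  have "set_integrable lborel {0<..} (\<lambda>z. LINT t:{0<..}|lborel. f t z) =
        set_integrable lborel {0<..} (\<lambda>z. of_real z powr (s - 1) * of_real (Xi z))"
    by (rule set_integrable_cong) (auto simp: in_t)
  then show "set_integrable lborel {0<..} (\<lambda>z. of_real z powr (s - 1) * of_real (Xi z))"
    using FB(1) by simp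
  have "(LINT z:{0<..}|lborel. of_real z powr (s - 1) * of_real (Xi z)) = (LINT z:{0<..}|lborel. LINT t:{0<..}|lborel. f t z)"
    by (rule set_lebesgue_integral_cong) (auto simp: in_t)
  also have "\<dots> = (LINT t:{0<..}|lborel. LINT z:{0<..}|lborel. f t z)" by (rule FB(2))
  also have "\<dots> = (LINT t:{0<..}|lborel. Gamma (s + 1) * (of_real t powr (- s - 1) / of_real (1 + t^2)))"
    by (rule set_lebesgue_integral_cong) (auto simp: in_z)
  also have "\<dots> = Gamma (s + 1) * (of_real pi / 2 / sin (of_real pi * (- s) / 2))"
    unfolding set_integral_mult_right MQ(2) ..
  also have "\<dots> = Kker s"
    by (simp add: Kker_def)
  finally show "(LINT z:{0<..}|lborel. of_real z powr (s - 1) * of_real (Xi z)) = Kker s" .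
qed


lemma norm_sin_lower:
  fixes z :: complex
  shows "sin (Re z) ^ 2 * exp (2 * \<bar>Im z\<bar>) / 4 \<le> norm (sin z) ^ 2"
proof -
  define A where "A = exp (2 * Im z)"
  define m where "m = sin (Re z) ^ 2"
  have A0: "A > 0" by (simp add: A_def)
  have m0: "0 \<le> m" "m \<le> 1" by (auto simp: m_def abs_square_le_1)
  have ns: "norm (sin z) ^ 2 = (A + 1 / A - 2 + 4 * m) / 4"
    unfolding norm_sin_squared cos_double_sin A_def m_def by (simp add: field_simps)
  have AA: "A + 1 / A \<ge> 2"
  proof -
    have "(A - 1)^2 / A \<ge> 0" using A0 by simp
    moreover have "(A - 1)^2 / A = A + 1 / A - 2" using A0 by (simp add: field_simps power2_eq_square)
    ultimately show ?thesis by simp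
  qed
  have "(1 - m) * (A + 1 / A - 2) \<ge> 0" using m0 AA by simp
  moreover have "(1 - m) * (A + 1 / A - 2) = (A + 1 / A - 2 + 4 * m) - m * (A + 1 / A + 2)"
    using A0 by (simp add: field_simps)
  ultimately have k: "m * (A + 1 / A + 2) \<le> A + 1 / A - 2 + 4 * m" by linarith
  have e: "exp (2 * \<bar>Im z\<bar>) \<le> A + 1 / A + 2"
  proof (cases "Im z \<ge> 0")
    case True
    then show ?thesis using A0 by (simp add: A_def)
  next
    case False
    then have "exp (2 * \<bar>Im z\<bar>) = 1 / A" by (simp add: A_def exp_minus field_simps)
    then show ?thesis using A0 by simp
  qed
  have "m * exp (2 * \<bar>Im z\<bar>) \<le> m * (A + 1 / A + 2)" using e m0 by (intro mult_left_mono) auto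
  then show ?thesis using k ns unfolding m_def by simp
qed

lemma norm_sin_lower':
  fixes z :: complex
  shows "\<bar>sin (Re z)\<bar> * exp \<bar>Im z\<bar> / 2 \<le> norm (sin z)"
proof -
  have "(\<bar>sin (Re z)\<bar> * exp \<bar>Im z\<bar> / 2)^2 = sin (Re z) ^ 2 * exp (2 * \<bar>Im z\<bar>) / 4"
    by (simp add: power2_eq_square power_mult_distrib exp_add[symmetric] field_simps)
  also have "\<dots> \<le> norm (sin z) ^ 2" by (rule norm_sin_lower)
  finally show ?thesis by (rule power2_le_imp_le) simp
qed

lemma Gamma_norm_bound:
  assumes w: "Re w > 0"
  shows "norm (Gamma w) \<le> Gamma (Re w)"
proof -
  have "Gamma w = (LINT u:{0<..}|lborel. of_real u powr (w - 1) * of_real (exp (- (1 * u))))"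
    using Gamma_scaled(2)[OF w zero_less_one] by (simp add: cpow_pos)
  then have "norm (Gamma w) \<le> (LBINT u:{0<..}. norm (of_real u powr (w - 1) * complex_of_real (exp (- (1 * u)))))"
    using set_integral_norm_bound[OF Gamma_scaled(1)[OF w zero_less_one]] by simp
  also have "\<dots> = (LBINT u:{0<..}. u powr (Re w - 1) * exp (- (1 * u)))"
    by (rule set_lebesgue_integral_cong) (auto simp: norm_mult norm_cpow_pos)
  also have "\<dots> = Gamma (Re w)"
    using Gamma_scaled_real(2)[of "Re w" 1] w by simp
  finally show ?thesis .
qed

definition CK :: "real \<Rightarrow> real" where
  "CK c = pi * Gamma (c + 1) / \<bar>sin (pi * c / 2)\<bar>"

lemma sin_c_pos:
  assumes "-1 < c" "c < 0"
  shows "\<bar>sin (pi * c / 2)\<bar> > 0"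
proof -
  have "sin (pi * c / 2) < 0"
  proof -
    have pc: "pi * c < 0" using assms by (simp add: mult_pos_neg)
    have "pi * (-c) < pi * 1" using assms by (intro mult_strict_left_mono) auto
    then have "sin (- (pi * c / 2)) > 0"
      using pc by (intro sin_gt_zero) auto
    then show ?thesis by simp
  qed
  then show ?thesis by simp
qed

lemma Kline_sin_bound:
  assumes c: "-1 < c" "c < 0"
  shows "\<bar>sin (pi * c / 2)\<bar> * exp (pi / 2 * \<bar>t\<bar>) / 2 \<le> norm (sin (of_real pi * Complex c t / 2))"
proof -
  have "Re (of_real pi * Complex c t / 2) = pi * c / 2" "Im (of_real pi * Complex c t / 2) = pi / 2 * t"
    by simp_all
  moreover have "\<bar>pi / 2 * t\<bar> = pi / 2 * \<bar>t\<bar>" by (simp add: abs_mult)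
  ultimately show ?thesis using norm_sin_lower'[of "of_real pi * Complex c t / 2"] by simp
qed

lemma Kline_bound:
  assumes c: "-1 < c" "c < 0"
  shows "norm (Kker (Complex c t)) \<le> CK c * exp (- (pi / 2 * \<bar>t\<bar>))"
proof -
  define S where "S = \<bar>sin (pi * c / 2)\<bar> * exp (pi / 2 * \<bar>t\<bar>) / 2"
  have S0: "S > 0" using sin_c_pos[OF c] by (simp add: S_def)
  have Sle: "S \<le> norm (sin (of_real pi * Complex c t / 2))"
    unfolding S_def by (rule Kline_sin_bound[OF c])
  have G: "norm (Gamma (Complex c t + 1)) \<le> Gamma (c + 1)"
    using Gamma_norm_bound[of "Complex c t + 1"] c by simp
  have Gp: "Gamma (c + 1) > 0" using c by (intro Gamma_real_pos) simp
  have "norm (Kker (Complex c t)) = pi / 2 * norm (Gamma (Complex c t + 1)) / norm (sin (of_real pi * Complex c t / 2))"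
    by (simp add: Kker_def norm_divide norm_mult)
  also have "\<dots> \<le> pi / 2 * Gamma (c + 1) / S"
    using G S0 Sle Gp by (intro frac_le mult_left_mono) auto
  also have "\<dots> = CK c * exp (- (pi / 2 * \<bar>t\<bar>))"
    by (simp add: S_def CK_def exp_minus field_simps)
  finally show ?thesis .
qed

lemma Kline_sin_nz:
  assumes c: "-1 < c" "c < 0"
  shows "sin (of_real pi * Complex c t / 2) \<noteq> 0"
proof -
  have "0 < \<bar>sin (pi * c / 2)\<bar> * exp (pi / 2 * \<bar>t\<bar>) / 2" using sin_c_pos[OF c] by simp
  also have "\<dots> \<le> norm (sin (of_real pi * Complex c t / 2))" by (rule Kline_sin_bound[OF c])
  finally show ?thesis by auto
qed

lemma Kline_cont:
  assumes c: "-1 < c" "c < 0"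
  shows "continuous_on UNIV (\<lambda>t. Kker (Complex c t))"
proof (rule continuous_at_imp_continuous_on, safe)
  fix t :: real
  have cc: "isCont (\<lambda>t. Complex c t) t"
  proof -
    have "(\<lambda>t. Complex c t) = (\<lambda>t. of_real c + \<i> * of_real t)" by (auto simp: complex_eq_iff)
    then show ?thesis by (simp add: continuous_intros)
  qed
  have np: "Complex c t + 1 \<notin> \<int>\<^sub>\<le>\<^sub>0"
  proof
    assume "Complex c t + 1 \<in> \<int>\<^sub>\<le>\<^sub>0"
    then obtain n :: int where "Complex c t + 1 = of_int n" "n \<le> 0" by (auto elim!: nonpos_Ints_cases)
    then have "Re (Complex c t + 1) = Re (of_int n)" by simp
    then have "c + 1 = n" by simp
    then show False using c \<open>n \<le> 0\<close> by linarith
  qed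
  show "isCont (\<lambda>t. Kker (Complex c t)) t"
    unfolding Kker_def
    by (intro continuous_intros isCont_o2[OF cc] isCont_Gamma np Kline_sin_nz[OF c]) auto
qed

lemma integrable_exp_abs:
  assumes a: "a > 0"
  shows "integrable lborel (\<lambda>t::real. exp (- (a * \<bar>t\<bar>)))"
proof -
  have p: "set_integrable lborel {0<..} (\<lambda>t::real. exp (- (a * t)))"
  proof -
    have "set_integrable lborel {0<..} (\<lambda>t. t powr (1 - 1) * exp (- (a * t)))"
      by (rule Gamma_scaled_real(1)) (use a in auto)
    moreover have "set_integrable lborel {0<..} (\<lambda>t. t powr (1 - 1) * exp (- (a * t))) = set_integrable lborel {0<..} (\<lambda>t::real. exp (- (a * t)))"
      by (rule set_integrable_cong) auto
    ultimately show ?thesis by simp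
  qed
  define g where "g t = indicator {0<..} t * exp (- (a * t))" for t :: real
  have gi: "integrable lborel g" using p unfolding set_integrable_def g_def by simp
  have gi2: "integrable lborel (\<lambda>t. g (0 + (-1) * t))"
    using gi lborel_integrable_real_affine_iff[of "-1" g 0] by simp
  have I1: "integrable lborel (\<lambda>t. g t + g (0 + (-1) * t))" using gi gi2 by simp
  have A1: "AE t in lborel. g t + g (0 + (-1) * t) = exp (- (a * \<bar>t\<bar>))"
  proof -
    have "AE t in lborel. t \<noteq> 0" by (rule AE_lborel_singleton)
    then show ?thesis by eventually_elim (auto simp: g_def indicator_def)
  qed
  have M1: "(\<lambda>t::real. exp (- (a * \<bar>t\<bar>))) \<in> borel_measurable lborel" by measurable
  show ?thesis by (rule integrable_cong_AE_imp[OF I1 M1 A1])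
qed

lemma Kline_integrable:
  assumes c: "-1 < c" "c < 0"
  shows "integrable lborel (\<lambda>t. Kker (Complex c t))"
proof (rule Bochner_Integration.integrable_bound)
  show "integrable lborel (\<lambda>t. CK c * exp (- (pi / 2 * \<bar>t\<bar>)))"
    using integrable_exp_abs[of "pi / 2"] by simp
  show "(\<lambda>t. Kker (Complex c t)) \<in> borel_measurable lborel"
    using Kline_cont[OF c] by (simp add: borel_measurable_continuous_onI)
  show "AE t in lborel. norm (Kker (Complex c t)) \<le> norm (CK c * exp (- (pi / 2 * \<bar>t\<bar>)))"
  proof (rule AE_I2)
    fix t
    have "CK c \<ge> 0" using c by (simp add: CK_def Gamma_real_pos less_imp_le)
    then show "norm (Kker (Complex c t)) \<le> norm (CK c * exp (- (pi / 2 * \<bar>t\<bar>)))"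
      using Kline_bound[OF c, of t] by simp
  qed
qed


lemma cont_param:
  fixes f :: "real \<Rightarrow> real \<Rightarrow> 'b::{banach,second_countable_topology}"
  assumes meas: "\<And>z. z \<in> S \<Longrightarrow> f z \<in> borel_measurable lborel"
    and w: "integrable lborel w"
    and bnd: "\<And>z t. z \<in> S \<Longrightarrow> norm (f z t) \<le> w t"
    and cont: "\<And>t. continuous_on S (\<lambda>z. f z t)"
  shows "continuous_on S (\<lambda>z. \<integral>t. f z t \<partial>lborel)"
proof (rule continuous_on_sequentiallyI)
  fix u a assume u: "\<forall>n. u n \<in> S" and a: "a \<in> S" and lim: "u \<longlonglongrightarrow> a"
  show "(\<lambda>n. \<integral>t. f (u n) t \<partial>lborel) \<longlonglongrightarrow> \<integral>t. f a t \<partial>lborel"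
  proof (rule integral_dominated_convergence[where w = w])
    show "(\<lambda>t. f a t) \<in> borel_measurable lborel" using meas[OF a] by simp
    show "(\<lambda>t. f (u n) t) \<in> borel_measurable lborel" for n using meas u by simp
    show "integrable lborel w" by (fact w)
    show "AE t in lborel. (\<lambda>n. f (u n) t) \<longlonglongrightarrow> f a t"
    proof (rule AE_I2)
      fix t
      have "continuous_on S (\<lambda>z. f z t)" by (rule cont)
      then show "(\<lambda>n. f (u n) t) \<longlonglongrightarrow> f a t"
        using u a lim unfolding continuous_on_sequentially comp_def by blast
    qed
    show "AE t in lborel. norm (f (u n) t) \<le> w t" for n
      using bnd u by auto
  qed
qed

lemma zero_from_intervals:
  fixes R :: "real \<Rightarrow> complex"
  assumes cont: "continuous_on {0<..} R"
    and zero: "\<And>A B. 0 < A \<Longrightarrow> A \<le> B \<Longrightarrow> (\<integral>z. indicator {A..B} z *\<^sub>R R z \<partial>lborel) = 0"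
    and z0: "z0 > 0"
  shows "R z0 = 0"
proof -
  define A where "A = z0 / 2"
  define B where "B = 2 * z0"
  have AB: "0 < A" "A < B" "z0 \<in> {A..B}" using z0 by (auto simp: A_def B_def)
  have cAB: "continuous_on {A..B} R" by (rule continuous_on_subset[OF cont]) (use AB in auto)
  have int0: "integral {A..u} R = 0" if "u \<in> {A..B}" for u
  proof -
    have cu: "continuous_on {A..u} R" by (rule continuous_on_subset[OF cAB]) (use that in auto)
    have "(LINT x:{A..u}|lborel. R x) = integral {A..u} R"
      by (rule set_borel_integral_eq_integral(2)[OF borel_integrable_atLeastAtMost'[OF cu]])
    moreover have "(LINT x:{A..u}|lborel. R x) = 0"
      using zero[of A u] AB that unfolding set_lebesgue_integral_def by auto
    ultimately show ?thesis by simp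
  qed
  have D1: "((\<lambda>u. integral {A..u} R) has_vector_derivative R z0) (at z0 within {A..B})"
    by (rule integral_has_vector_derivative[OF cAB AB(3)])
  have D2: "((\<lambda>u. integral {A..u} R) has_vector_derivative 0) (at z0 within {A..B})"
    by (rule has_vector_derivative_transform[OF AB(3), where f = "\<lambda>_. 0"]) (auto simp: int0)
  show ?thesis
    using vector_derivative_unique_within_closed_interval[OF AB(2), of z0 "\<lambda>u. integral {A..u} R"] D1 D2 AB
    by (simp add: cbox_interval)
qed

lemma exp_int_real:
  assumes a: "a > 0"
  shows "set_integrable lborel {0<..} (\<lambda>t::real. exp (- (a * t)))"
proof -
  have "set_integrable lborel {0<..} (\<lambda>t. t powr (1 - 1) * exp (- (a * t)))"
    by (rule Gamma_scaled_real(1)) (use a in auto)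
  moreover have "set_integrable lborel {0<..} (\<lambda>t. t powr (1 - 1) * exp (- (a * t))) = set_integrable lborel {0<..} (\<lambda>t::real. exp (- (a * t)))"
    by (rule set_integrable_cong) auto
  ultimately show ?thesis by simp
qed

lemma div_1psq_le: "0 \<le> x \<Longrightarrow> x / (1 + t^2) \<le> (x::real)"
  by (simp add: divide_le_eq add_pos_nonneg algebra_simps)

lemma Xi_cont: "continuous_on {0<..} Xi"
proof (rule continuous_at_imp_continuous_on, safe)
  fix z0 :: real assume z0: "z0 > 0"
  define a where "a = z0 / 2"
  have a: "a > 0" "a < z0" using z0 by (auto simp: a_def)
  define f where "f z t = indicator {0<..} t * (exp (- z * t) / (1 + t^2))" for z t :: real
  have XI: "Xi z = z * (\<integral>t. f z t \<partial>lborel)" for z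
    by (simp add: Xi_def f_def set_lebesgue_integral_def)
  have "continuous_on {a<..} (\<lambda>z. \<integral>t. f z t \<partial>lborel)"
  proof (rule cont_param[where w = "\<lambda>t. indicator {0<..} t * exp (- (a * t))"])
    show "f z \<in> borel_measurable lborel" for z unfolding f_def by measurable
    show "integrable lborel (\<lambda>t. indicator {0<..} t * exp (- (a * t)))"
      using exp_int_real[OF a(1)] unfolding set_integrable_def by simp
    show "norm (f z t) \<le> indicator {0<..} t * exp (- (a * t))" if "z \<in> {a<..}" for z t
    proof (cases "t > 0")
      case True
      have "exp (- z * t) / (1 + t^2) \<le> exp (- z * t)"
        by (rule div_1psq_le) simp
      also have "\<dots> \<le> exp (- (a * t))" using that True by (simp add: mult_right_mono)
      finally show ?thesis using True by (simp add: f_def)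
    qed (simp add: f_def)
    show "continuous_on {a<..} (\<lambda>z. f z t)" for t
      unfolding f_def by (intro continuous_intros) (simp add: add_pos_nonneg)
  qed
  then have "isCont (\<lambda>z. \<integral>t. f z t \<partial>lborel) z0"
    using a by (subst (asm) continuous_on_eq_continuous_at) auto
  then have "isCont (\<lambda>z. z * (\<integral>t. f z t \<partial>lborel)) z0"
    by (intro continuous_intros)
  then show "isCont Xi z0" unfolding XI .
qed


lemma Complex_eq': "Complex c t = complex_of_real c + \<i> * complex_of_real t"
  by (simp add: complex_eq_iff)

definition Ginv :: "real \<Rightarrow> real \<Rightarrow> complex" where
  "Ginv c z = (\<integral>t. Kker (Complex c t) * of_real z powr (- Complex c t) \<partial>lborel)"

lemma Kline_meas[measurable]:
  assumes "-1 < c" "c < 0"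
  shows "(\<lambda>t. Kker (Complex c t)) \<in> borel_measurable borel"
  using Kline_cont[OF assms] by (simp add: borel_measurable_continuous_onI)

lemma Ginv_cont:
  assumes c: "-1 < c" "c < 0"
  shows "continuous_on {0<..} (Ginv c)"
proof (rule continuous_at_imp_continuous_on, safe)
  fix z0 :: real assume z0: "z0 > 0"
  define a b where "a = z0 / 2" and "b = 2 * z0"
  have ab: "0 < a" "a < z0" "z0 < b" using z0 by (auto simp: a_def b_def)
  note [measurable] = Kline_meas[OF c]
  define f where "f z t = Kker (Complex c t) * of_real z powr (- Complex c t)" for z t
  have fexp: "f z t = Kker (Complex c t) * exp (- (complex_of_real c + \<i> * complex_of_real t) * of_real (ln z))" if "z > 0" for z t
    using that by (simp add: f_def cpow_pos Complex_eq')
  have "continuous_on {a<..<b} (\<lambda>z. \<integral>t. f z t \<partial>lborel)"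
  proof (rule cont_param[where w = "\<lambda>t. norm (Kker (Complex c t)) * b powr (- c)"])
    show "f z \<in> borel_measurable lborel" if "z \<in> {a<..<b}" for z
    proof -
      have "z > 0" using that ab by auto
      then have "f z = (\<lambda>t. Kker (Complex c t) * exp (- (complex_of_real c + \<i> * complex_of_real t) * of_real (ln z)))"
        using fexp by auto
      then show ?thesis by simp
    qed
    show "integrable lborel (\<lambda>t. norm (Kker (Complex c t)) * b powr (- c))"
      using Kline_integrable[OF c] by (intro integrable_mult_left integrable_norm)
    show "norm (f z t) \<le> norm (Kker (Complex c t)) * b powr (- c)" if "z \<in> {a<..<b}" for z t
    proof -
      have z: "z > 0" "z \<le> b" using that ab by auto
      have "norm (f z t) = norm (Kker (Complex c t)) * z powr (- c)"
        using z by (simp add: f_def norm_mult norm_cpow_pos)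
      also have "\<dots> \<le> norm (Kker (Complex c t)) * b powr (- c)"
        using z c by (intro mult_left_mono powr_mono2) auto
      finally show ?thesis .
    qed
    show "continuous_on {a<..<b} (\<lambda>z. f z t)" for t
    proof -
      have "continuous_on {a<..<b} (\<lambda>z. Kker (Complex c t) * exp (- (complex_of_real c + \<i> * complex_of_real t) * of_real (ln z)))"
        using ab by (intro continuous_intros) auto
      moreover have "\<And>z. z \<in> {a<..<b} \<Longrightarrow> f z t = Kker (Complex c t) * exp (- (complex_of_real c + \<i> * complex_of_real t) * of_real (ln z))"
        using fexp ab by auto
      ultimately show ?thesis using continuous_on_cong by (smt (verit, best))
    qed
  qed
  then have "isCont (\<lambda>z. \<integral>t. f z t \<partial>lborel) z0"
    using ab by (subst (asm) continuous_on_eq_continuous_at) auto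
  then show "isCont (Ginv c) z0" unfolding Ginv_def f_def .
qed


lemma XiM[measurable]: "(\<lambda>z. indicator {0<..} z * Xi z) \<in> borel_measurable borel"
  using borel_measurable_continuous_on_indicator[OF _ Xi_cont] by simp

lemma Xi_nonneg: "z \<ge> 0 \<Longrightarrow> Xi z \<ge> 0"
  unfolding Xi_def set_lebesgue_integral_def
  by (intro mult_nonneg_nonneg integral_nonneg_AE AE_I2) (auto simp: add_pos_nonneg)

lemma set_integrable_of_real_iff:
  "set_integrable M A (\<lambda>x. complex_of_real (f x)) \<longleftrightarrow> set_integrable M A f"
proof -
  have "(\<lambda>x. indicator A x *\<^sub>R complex_of_real (f x)) = (\<lambda>x. complex_of_real (indicator A x *\<^sub>R f x))"
    by (auto simp: indicator_def)
  then show ?thesis unfolding set_integrable_def by (simp only: complex_of_real_integrable_eq)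
qed

locale cline =
  fixes c :: real
  assumes c1: "-1 < c" and c0: "c < 0"
begin

definition kap where "kap = (LBINT z:{0<..}. z powr (c - 1) * Xi z)"

lemma cpow_real_eq: "z > 0 \<Longrightarrow> complex_of_real z powr (complex_of_real c - 1) = complex_of_real (z powr (c - 1))"
  using powr_of_real[of z "c - 1"] by simp

lemma kap_facts:
  shows "set_integrable lborel {0<..} (\<lambda>z. z powr (c - 1) * Xi z)"
    and "complex_of_real kap = Kker (of_real c)"
proof -
  have s: "-1 < Re (complex_of_real c)" "Re (complex_of_real c) < 0" using c1 c0 by simp_all
  note MX = Mellin_Xi[OF s]
  have eq: "set_integrable lborel {0<..} (\<lambda>z. of_real z powr (of_real c - 1) * complex_of_real (Xi z)) =
        set_integrable lborel {0<..} (\<lambda>z. complex_of_real (z powr (c - 1) * Xi z))"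
    by (rule set_integrable_cong) (auto simp: cpow_real_eq)
  show "set_integrable lborel {0<..} (\<lambda>z. z powr (c - 1) * Xi z)"
    using MX(1) unfolding eq set_integrable_of_real_iff .
  have "complex_of_real kap = (LINT z:{0<..}|lborel. complex_of_real (z powr (c - 1) * Xi z))"
    unfolding kap_def set_integral_complex_of_real ..
  also have "\<dots> = (LINT z:{0<..}|lborel. of_real z powr (of_real c - 1) * complex_of_real (Xi z))"
    by (rule set_lebesgue_integral_cong) (auto simp: cpow_real_eq)
  also have "\<dots> = Kker (of_real c)" by (rule MX(2))
  finally show "complex_of_real kap = Kker (of_real c)" .
qed

lemma sin_c_neg: "sin (pi * c / 2) < 0"
proof -
  have pc: "pi * c < 0" using c0 by (simp add: mult_pos_neg)
  have "pi * (-c) < pi * 1" using c1 by (intro mult_strict_left_mono) auto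
  then have "sin (- (pi * c / 2)) > 0"
    using pc by (intro sin_gt_zero) auto
  then show ?thesis by simp
qed

lemma kap_pos: "kap > 0"
proof -
  have g: "Gamma (complex_of_real c + 1) = complex_of_real (Gamma (c + 1))"
    using Gamma_complex_of_real[of "c+1"] by simp
  have "Kker (of_real c) = complex_of_real (- (pi / 2) * Gamma (c + 1) / sin (pi * c / 2))"
    by (simp add: Kker_def g flip: sin_of_real)
  then have "kap = - (pi / 2) * Gamma (c + 1) / sin (pi * c / 2)"
    using kap_facts(2) of_real_eq_iff by metis
  moreover have "Gamma (c + 1) > 0" using c1 by (intro Gamma_real_pos) simp
  ultimately show ?thesis using sin_c_neg by (simp add: divide_pos_neg mult_pos_pos)
qed

definition dd where "dd z = (indicator {0<..} z * Xi z) * z powr (c - 1) / kap"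

lemma dd_meas[measurable]: "dd \<in> borel_measurable borel"
  unfolding dd_def by measurable

lemma dd_nonneg: "dd z \<ge> 0"
  using kap_pos Xi_nonneg[of z] by (auto simp: dd_def indicator_def)

lemma dd_int: "integrable lborel dd"
proof -
  have "integrable lborel (\<lambda>z. indicator {0<..} z *\<^sub>R (z powr (c - 1) * Xi z) / kap)"
    using kap_facts(1) unfolding set_integrable_def by simp
  moreover have "(\<lambda>z. indicator {0<..} z *\<^sub>R (z powr (c - 1) * Xi z) / kap) = dd"
    by (auto simp: dd_def)
  ultimately show ?thesis by simp
qed

lemma dd_integral: "(\<integral>z. dd z \<partial>lborel) = 1"
proof -
  have "(\<lambda>z. indicator {0<..} z *\<^sub>R (z powr (c - 1) * Xi z) / kap) = dd"
    by (auto simp: dd_def)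
  then have "(\<integral>z. dd z \<partial>lborel) = kap / kap"
    unfolding kap_def set_lebesgue_integral_def by (metis integral_divide_zero)
  then show ?thesis using kap_pos by simp
qed

definition NN where "NN = density lborel (\<lambda>z. ennreal (dd z))"
definition MM where "MM = distr NN borel ln"

lemma NN_sets[simp]: "sets NN = sets borel" and NN_space[simp]: "space NN = UNIV"
  by (simp_all add: NN_def)

lemma prob_NN: "prob_space NN"
proof (rule prob_spaceI)
  have "emeasure NN (space NN) = (\<integral>\<^sup>+ x. ennreal (dd x) * indicator UNIV x \<partial>lborel)"
    unfolding NN_def by (subst emeasure_density) auto
  also have "\<dots> = (\<integral>\<^sup>+ x. ennreal (dd x) \<partial>lborel)" by simp
  also have "\<dots> = ennreal (\<integral>x. dd x \<partial>lborel)"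
    by (rule nn_integral_eq_integral[OF dd_int]) (simp add: dd_nonneg)
  finally show "emeasure NN (space NN) = 1" by (simp add: dd_integral)
qed

lemma ln_meas_NN: "ln \<in> measurable NN borel"
  by (simp add: measurable_cong_sets[OF NN_sets refl])

lemma MM_real_distribution: "real_distribution MM"
proof -
  have "prob_space MM" unfolding MM_def
    by (rule prob_space.prob_space_distr[OF prob_NN ln_meas_NN])
  moreover have "sets MM = sets borel" by (simp add: MM_def)
  ultimately show ?thesis by (simp add: real_distribution_def real_distribution_axioms_def)
qed

lemma char_MM: "char MM t = Kker (Complex c t) / of_real kap"
proof -
  have "char MM t = (CLINT x|MM. iexp (t * x))" by (simp add: char_def)
  also have "\<dots> = (CLINT z|NN. iexp (t * ln z))"
    unfolding MM_def by (rule integral_distr[OF ln_meas_NN]) measurable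
  also have "\<dots> = (CLINT z|lborel. dd z *\<^sub>R iexp (t * ln z))"
    unfolding NN_def by (rule integral_density) (auto simp: dd_nonneg)
  also have "\<dots> = (CLINT z|lborel. indicator {0<..} z *\<^sub>R (of_real z powr (Complex c t - 1) * of_real (Xi z)) / of_real kap)"
  proof (rule Bochner_Integration.integral_cong[OF refl])
    fix z :: real
    show "dd z *\<^sub>R iexp (t * ln z) = indicator {0<..} z *\<^sub>R (of_real z powr (Complex c t - 1) * of_real (Xi z)) / of_real kap"
    proof (cases "z > 0")
      case True
      have "of_real z powr (Complex c t - 1) = complex_of_real (z powr (c - 1)) * iexp (t * ln z)"
        using True by (simp add: cpow_pos powr_def exp_of_real[symmetric] exp_add[symmetric] Complex_eq' algebra_simps Ln_of_real)
      then show ?thesis using True by (simp add: dd_def scaleR_conv_of_real)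
    qed (simp add: dd_def)
  qed
  also have "\<dots> = (LINT z:{0<..}|lborel. of_real z powr (Complex c t - 1) * of_real (Xi z)) / of_real kap"
    unfolding set_lebesgue_integral_def by simp
  also have "\<dots> = Kker (Complex c t) / of_real kap"
    using Mellin_Xi(2)[of "Complex c t"] c1 c0 by simp
  finally show ?thesis .
qed

end


definition Fab :: "real \<Rightarrow> real \<Rightarrow> real \<Rightarrow> complex" where
  "Fab a b t = (iexp (- (t * a)) - iexp (- (t * b))) / (\<i> * t)"

lemma Fab_bound: "a \<le> b \<Longrightarrow> norm (Fab a b t) \<le> b - a"
proof (cases "t = 0")
  case False
  assume ab: "a \<le> b"
  have "cmod ((iexp ((- t) * b) - iexp ((- t) * a)) / (\<i> * complex_of_real (- t))) \<le> b - a"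
    by (rule Levy_Inversion_aux2) (use ab False in auto)
  moreover have "(iexp ((- t) * b) - iexp ((- t) * a)) / (\<i> * complex_of_real (- t)) = Fab a b t"
    unfolding Fab_def by (simp add: minus_divide_left)
  ultimately show ?thesis by metis
qed (simp add: Fab_def)

lemma Fab_meas[measurable]: "Fab a b \<in> borel_measurable borel"
  unfolding Fab_def by measurable

lemma FTC_Fab:
  assumes ab: "a \<le> b" and t: "t \<noteq> 0"
  shows "Fab a b t = (\<integral>z. indicator {exp a..exp b} z *\<^sub>R (complex_of_real z powr (Complex (-1) (-t))) \<partial>lborel)"
proof -
  define w where "w = Complex 0 (-t)"
  have w0: "w \<noteq> 0" using t by (simp add: w_def complex_eq_iff)
  have wm1: "w - 1 = Complex (-1) (-t)" by (simp add: w_def complex_eq_iff)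
  have AB: "exp a \<le> exp b" using ab by simp
  have "(\<integral>z. indicator {exp a..exp b} z *\<^sub>R (complex_of_real z powr (w - 1)) \<partial>lborel)
        = complex_of_real (exp b) powr w / w - complex_of_real (exp a) powr w / w"
  proof (rule integral_FTC_atLeastAtMost[OF AB])
    fix x assume x: "exp a \<le> x" "x \<le> exp b"
    have xp: "x > 0" using x(1) exp_gt_zero[of a] by linarith
    have "((\<lambda>u. u powr w / w) has_field_derivative (w * (of_real x) powr (w - 1)) / w) (at (of_real x))"
      by (intro derivative_eq_intros has_field_derivative_powr) (use xp w0 in \<open>auto simp: complex_nonpos_Reals_iff\<close>)
    then have "((\<lambda>x. (of_real x) powr w / w) has_vector_derivative (w * (of_real x) powr (w - 1)) / w) (at x within {exp a..exp b})"
      by (rule has_vector_derivative_real_field)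
    then show "((\<lambda>x. complex_of_real x powr w / w) has_vector_derivative complex_of_real x powr (w - 1)) (at x within {exp a..exp b})"
      using w0 by simp
  next
    have "continuous_on {exp a..exp b} (\<lambda>x. exp ((w - 1) * of_real (ln x)))"
      by (intro continuous_intros) (auto intro: less_le_trans[OF exp_gt_zero])
    moreover have "\<And>x. x \<in> {exp a..exp b} \<Longrightarrow> exp ((w - 1) * of_real (ln x)) = complex_of_real x powr (w - 1)"
    proof -
      fix x assume "x \<in> {exp a..exp b}"
      then have "x > 0" using exp_gt_zero[of a] by (metis atLeastAtMost_iff less_le_trans)
      then show "exp ((w - 1) * of_real (ln x)) = complex_of_real x powr (w - 1)" by (simp add: cpow_pos)
    qed
    ultimately show "continuous_on {exp a..exp b} (\<lambda>x. complex_of_real x powr (w - 1))"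
      using continuous_on_cong by (smt (verit, best))
  qed
  also have "\<dots> = Fab a b t"
    using w0 by (simp add: Fab_def cpow_pos w_def Complex_eq' field_simps)
  finally show ?thesis by (simp add: wm1)
qed

context cline
begin

lemma NN_measure: "X \<in> sets borel \<Longrightarrow> measure NN X = enn2real (\<integral>\<^sup>+ x. ennreal (dd x) * indicator X x \<partial>lborel)"
  unfolding NN_def measure_def by (subst emeasure_density) auto

lemma MM_measure: "X \<in> sets borel \<Longrightarrow> measure MM X = measure NN (ln -` X)"
  unfolding MM_def by (subst measure_distr[OF ln_meas_NN]) auto

lemma MM_atom: "measure MM {a} = 0"
proof -
  have "AE x in lborel. ennreal (dd x) * indicator (ln -` {a}) x = 0"
  proof -
    have "AE x in lborel. x \<noteq> exp a" by (rule AE_lborel_singleton)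
    then show "AE x in lborel. ennreal (dd x) * indicator (ln -` {a}) x = 0"
    proof eventually_elim
      fix x assume x: "x \<noteq> exp a"
      show "ennreal (dd x) * indicator (ln -` {a}) x = 0"
      proof (cases "x > 0")
        case True
        then show ?thesis using x by (auto simp: indicator_def)
      qed (simp add: dd_def)
    qed
  qed
  then have "(\<integral>\<^sup>+ x. ennreal (dd x) * indicator (ln -` {a}) x \<partial>lborel) = 0"
    by (subst nn_integral_cong_AE[OF \<open>AE x in lborel. ennreal (dd x) * indicator (ln -` {a}) x = 0\<close>]) simp
  moreover have "ln -` {a} \<in> sets borel" using measurable_sets[of ln borel borel "{a}"] by simp
  ultimately show ?thesis
    by (simp add: MM_measure NN_measure)
qed

lemma MM_interval:
  assumes ab: "a \<le> b"
  shows "measure MM {a<..b} = (\<integral>z. indicator {exp a..exp b} z * (z powr (c - 1) * Xi z) \<partial>lborel) / kap"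
proof -
  have "(\<integral>\<^sup>+ x. ennreal (dd x) * indicator (ln -` {a<..b}) x \<partial>lborel) =
        (\<integral>\<^sup>+ x. ennreal (indicator {exp a..exp b} x * dd x) \<partial>lborel)"
  proof (rule nn_integral_cong_AE)
    have "AE x in lborel. x \<noteq> exp a" by (rule AE_lborel_singleton)
    then show "AE x in lborel. ennreal (dd x) * indicator (ln -` {a<..b}) x = ennreal (indicator {exp a..exp b} x * dd x)"
    proof eventually_elim
      fix x assume x: "x \<noteq> exp a"
      show "ennreal (dd x) * indicator (ln -` {a<..b}) x = ennreal (indicator {exp a..exp b} x * dd x)"
      proof (cases "x > 0")
        case True
        have "(a < ln x \<and> ln x \<le> b) \<longleftrightarrow> (exp a \<le> x \<and> x \<le> exp b)"
          using True x by (metis exp_less_cancel_iff exp_le_cancel_iff exp_ln order_le_less)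
        then show ?thesis by (auto simp: indicator_def)
      next
        case False
        then have "\<not> (exp a \<le> x)" using exp_gt_zero[of a] by linarith
        then show ?thesis using False by (simp add: dd_def)
      qed
    qed
  qed
  also have "\<dots> = ennreal (\<integral>x. indicator {exp a..exp b} x * dd x \<partial>lborel)"
    using integrable_mult_indicator[of "{exp a..exp b}" lborel dd] dd_int
    by (intro nn_integral_eq_integral) (auto simp: dd_nonneg)
  moreover have "ln -` {a<..b} \<in> sets borel" using measurable_sets[of ln borel borel "{a<..b}"] by simp
  ultimately have "measure MM {a<..b} = (\<integral>x. indicator {exp a..exp b} x * dd x \<partial>lborel)"
    by (simp add: MM_measure NN_measure integral_nonneg_AE dd_nonneg)
  also have "\<dots> = (\<integral>z. indicator {exp a..exp b} z * (z powr (c - 1) * Xi z) / kap \<partial>lborel)"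
  proof (rule Bochner_Integration.integral_cong[OF refl])
    fix z
    show "indicator {exp a..exp b} z * dd z = indicator {exp a..exp b} z * (z powr (c - 1) * Xi z) / kap"
    proof (cases "exp a \<le> z \<and> z \<le> exp b")
      case True
      then have "z > 0" using exp_gt_zero[of a] by linarith
      then show ?thesis using True by (simp add: indicator_def dd_def)
    next
      case False
      then have "z \<notin> {exp a..exp b}" by simp
      then show ?thesis by simp
    qed
  qed
  also have "\<dots> = (\<integral>z. indicator {exp a..exp b} z * (z powr (c - 1) * Xi z) \<partial>lborel) / kap"
    by simp
  finally show ?thesis .
qed

end


context cline
begin

lemma K_int: "integrable lborel (\<lambda>t. Kker (Complex c t))"
  by (rule Kline_integrable[OF c1 c0])

lemma FK_int: "a \<le> b \<Longrightarrow> integrable lborel (\<lambda>t. Fab a b t * (Kker (Complex c t) / of_real kap))"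
proof (rule Bochner_Integration.integrable_bound[where f = "\<lambda>t. (b - a) * norm (Kker (Complex c t) / of_real kap)"])
  assume ab: "a \<le> b"
  note [measurable] = Kline_meas[OF c1 c0]
  show "integrable lborel (\<lambda>t. (b - a) * norm (Kker (Complex c t) / of_real kap))"
    using K_int by (intro integrable_mult_right integrable_norm integrable_divide)
  show "(\<lambda>t. Fab a b t * (Kker (Complex c t) / of_real kap)) \<in> borel_measurable lborel"
    by measurable
  show "AE t in lborel. norm (Fab a b t * (Kker (Complex c t) / of_real kap)) \<le> norm ((b - a) * norm (Kker (Complex c t) / of_real kap))"
  proof (rule AE_I2)
    fix t
    have "norm (Fab a b t * (Kker (Complex c t) / of_real kap)) = norm (Fab a b t) * norm (Kker (Complex c t) / of_real kap)"
      by (rule norm_mult)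
    also have "\<dots> \<le> (b - a) * norm (Kker (Complex c t) / of_real kap)"
      using Fab_bound[OF ab] by (intro mult_right_mono) auto
    finally show "norm (Fab a b t * (Kker (Complex c t) / of_real kap)) \<le> norm ((b - a) * norm (Kker (Complex c t) / of_real kap))"
      using ab by simp
  qed
qed

lemma Levy_full:
  assumes ab: "a \<le> b"
  shows "complex_of_real (measure MM {a<..b}) = of_real (1 / (2 * pi)) * (CLBINT t. Fab a b t * (Kker (Complex c t) / of_real kap))"
proof -
  interpret R: real_distribution MM by (rule MM_real_distribution)
  define g where "g t = Fab a b t * (Kker (Complex c t) / of_real kap)" for t
  have gi: "integrable lborel g" unfolding g_def by (rule FK_int[OF ab])
  have L: "(\<lambda>T::nat. complex_of_real (1 / (2 * pi)) * (CLBINT t=ereal (real_of_int (- int T))..ereal (real T). g t))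
      \<longlonglongrightarrow> complex_of_real (measure MM {a<..b})"
    using R.Levy_Inversion[OF ab MM_atom MM_atom] unfolding g_def Fab_def[symmetric] char_MM .
  have eqT: "(CLBINT t=ereal (real_of_int (- int T))..ereal (real T). g t) = (\<integral>t. indicator {- real T<..<real T} t *\<^sub>R g t \<partial>lborel)" for T :: nat
    by (simp add: interval_lebesgue_integral_def set_lebesgue_integral_def)
  have "(\<lambda>T::nat. \<integral>t. indicator {- real T<..<real T} t *\<^sub>R g t \<partial>lborel) \<longlonglongrightarrow> (\<integral>t. g t \<partial>lborel)"
  proof (rule integral_dominated_convergence[where w = "\<lambda>t. norm (g t)"])
    show "g \<in> borel_measurable lborel" using gi by auto
    show "(\<lambda>t. indicator {- real T<..<real T} t *\<^sub>R g t) \<in> borel_measurable lborel" for T :: nat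
      using gi by (intro borel_measurable_scaleR borel_measurable_indicator) auto
    show "integrable lborel (\<lambda>t. norm (g t))" using gi by auto
    show "AE t in lborel. (\<lambda>T::nat. indicator {- real T<..<real T} t *\<^sub>R g t) \<longlonglongrightarrow> g t"
    proof (rule AE_I2)
      fix t :: real
      obtain N :: nat where N: "\<bar>t\<bar> < real N" using reals_Archimedean2 by blast
      have "eventually (\<lambda>T. indicator {- real T<..<real T} t *\<^sub>R g t = g t) sequentially"
        unfolding eventually_sequentially
      proof (intro exI allI impI)
        fix T assume "N \<le> T"
        then have "\<bar>t\<bar> < real T" using N by (meson less_le_trans of_nat_le_iff)
        then show "indicator {- real T<..<real T} t *\<^sub>R g t = g t" by (auto simp: indicator_def)
      qed
      then show "(\<lambda>T::nat. indicator {- real T<..<real T} t *\<^sub>R g t) \<longlonglongrightarrow> g t"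
        by (rule tendsto_eventually)
    qed
    show "AE t in lborel. norm (indicator {- real T<..<real T} t *\<^sub>R g t) \<le> norm (g t)" for T :: nat
      by (rule AE_I2) (auto simp: indicator_def)
  qed
  then have "(\<lambda>T::nat. complex_of_real (1 / (2 * pi)) * (CLBINT t=ereal (real_of_int (- int T))..ereal (real T). g t))
      \<longlonglongrightarrow> complex_of_real (1 / (2 * pi)) * (\<integral>t. g t \<partial>lborel)"
    unfolding eqT by (intro tendsto_mult tendsto_const)
  from LIMSEQ_unique[OF L this] show ?thesis unfolding g_def .
qed

lemma Fub:
  assumes ab: "a \<le> b"
  shows "(CLBINT t. Fab a b t * Kker (Complex c t)) =
         (\<integral>z. indicator {exp a..exp b} z *\<^sub>R (complex_of_real (z powr (c - 1)) * Ginv c z) \<partial>lborel)"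
proof -
  note [measurable] = Kline_meas[OF c1 c0]
  define A where "A = exp a"
  define B where "B = exp b"
  have A0: "A > 0" and AB: "A \<le> B" using ab by (auto simp: A_def B_def)
  have zpos: "z \<in> {A..B} \<Longrightarrow> z > 0" for z using A0 by auto
  define E where "E t z = exp ((- 1 - \<i> * of_real t) * of_real (ln z))" for t z :: real
  define H where "H t z = indicator {A..B} z *\<^sub>R (Kker (Complex c t) * E t z)" for t z
  have Hm: "(\<lambda>p. H (fst p) (snd p)) \<in> borel_measurable (lborel \<Otimes>\<^sub>M lborel)"
    unfolding H_def E_def by measurable
  have nE: "norm (E t z) = 1 / z" if "z \<in> {A..B}" for t z
    using zpos[OF that] by (simp add: E_def norm_exp_eq_Re exp_minus field_simps)
  define C where "C = (\<integral>z. indicator {A..B} z * (1 / z) \<partial>lborel)"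
  have cE: "continuous_on {A..B} (\<lambda>z. Kker (Complex c t) * E t z)" for t
    unfolding E_def using A0 by (intro continuous_intros) auto
  have int: "integrable (lborel \<Otimes>\<^sub>M lborel) (\<lambda>(t, z). H t z)"
  proof (rule lborel_pair.Fubini_integrable)
    show "(\<lambda>(t, z). H t z) \<in> borel_measurable (lborel \<Otimes>\<^sub>M lborel)"
      using Hm by (simp add: case_prod_beta)
    have "(\<lambda>t. \<integral>z. norm (case (t, z) of (t, z) \<Rightarrow> H t z) \<partial>lborel) = (\<lambda>t. norm (Kker (Complex c t)) * C)"
    proof
      fix t
      have "(\<integral>z. norm (case (t, z) of (t, z) \<Rightarrow> H t z) \<partial>lborel) = (\<integral>z. norm (Kker (Complex c t)) * (indicator {A..B} z * (1 / z)) \<partial>lborel)"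
      proof (rule Bochner_Integration.integral_cong[OF refl])
        fix z
        show "norm (case (t, z) of (t, z) \<Rightarrow> H t z) = norm (Kker (Complex c t)) * (indicator {A..B} z * (1 / z))"
          by (cases "z \<in> {A..B}") (auto simp: H_def norm_mult nE)
      qed
      also have "\<dots> = norm (Kker (Complex c t)) * C" unfolding C_def by (rule integral_mult_right_zero)
      finally show "(\<integral>z. norm (case (t, z) of (t, z) \<Rightarrow> H t z) \<partial>lborel) = norm (Kker (Complex c t)) * C" .
    qed
    then show "integrable lborel (\<lambda>t. \<integral>z. norm (case (t, z) of (t, z) \<Rightarrow> H t z) \<partial>lborel)"
      using K_int by simp
    show "AE t in lborel. integrable lborel (\<lambda>z. case (t, z) of (t, z) \<Rightarrow> H t z)"
    proof (rule AE_I2)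
      fix t
      have "set_integrable lborel {A..B} (\<lambda>z. Kker (Complex c t) * E t z)"
        by (rule borel_integrable_atLeastAtMost'[OF cE])
      then show "integrable lborel (\<lambda>z. case (t, z) of (t, z) \<Rightarrow> H t z)"
        unfolding set_integrable_def H_def by simp
    qed
  qed
  have F1: "(\<integral>z. \<integral>t. H t z \<partial>lborel \<partial>lborel) = (\<integral>t. \<integral>z. H t z \<partial>lborel \<partial>lborel)"
    by (rule lborel_pair.Fubini_integral[OF int])
  have in_z: "(\<integral>z. H t z \<partial>lborel) = Fab a b t * Kker (Complex c t)" if t: "t \<noteq> 0" for t
  proof -
    have "(\<integral>z. H t z \<partial>lborel) = (\<integral>z. Kker (Complex c t) * (indicator {A..B} z *\<^sub>R complex_of_real z powr (Complex (-1) (-t))) \<partial>lborel)"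
    proof (rule Bochner_Integration.integral_cong[OF refl])
      fix z
      show "H t z = Kker (Complex c t) * (indicator {A..B} z *\<^sub>R complex_of_real z powr (Complex (-1) (-t)))"
      proof (cases "z \<in> {A..B}")
        case True
        have "E t z = complex_of_real z powr (Complex (-1) (-t))"
          using zpos[OF True] by (simp add: E_def cpow_pos Complex_eq')
        then show ?thesis using True by (simp add: H_def)
      qed (simp add: H_def)
    qed
    also have "\<dots> = Kker (Complex c t) * (\<integral>z. indicator {A..B} z *\<^sub>R complex_of_real z powr (Complex (-1) (-t)) \<partial>lborel)"
      by (rule integral_mult_right_zero)
    also have "\<dots> = Kker (Complex c t) * Fab a b t"
      by (simp add: FTC_Fab[OF ab t] A_def B_def)
    finally show ?thesis by (simp add: mult.commute)
  qed
  have in_t: "(\<integral>t. H t z \<partial>lborel) = indicator {A..B} z *\<^sub>R (complex_of_real (z powr (c - 1)) * Ginv c z)" for z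
  proof (cases "z \<in> {A..B}")
    case True
    have zp: "z > 0" by (rule zpos[OF True])
    have "(\<integral>t. H t z \<partial>lborel) = (\<integral>t. complex_of_real (z powr (c - 1)) * (Kker (Complex c t) * of_real z powr (- Complex c t)) \<partial>lborel)"
    proof (rule Bochner_Integration.integral_cong[OF refl])
      fix t
      have "E t z = complex_of_real (z powr (c - 1)) * of_real z powr (- Complex c t)"
        using zp by (simp add: E_def cpow_pos powr_def exp_of_real[symmetric] exp_add[symmetric] Complex_eq' algebra_simps Ln_of_real)
      then show "H t z = complex_of_real (z powr (c - 1)) * (Kker (Complex c t) * of_real z powr (- Complex c t))"
        using True by (simp add: H_def)
    qed
    also have "\<dots> = complex_of_real (z powr (c - 1)) * Ginv c z"
      unfolding Ginv_def by simp
    finally show ?thesis using True by simp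
  qed (simp add: H_def)
  have "(CLBINT t. Fab a b t * Kker (Complex c t)) = (\<integral>t. \<integral>z. H t z \<partial>lborel \<partial>lborel)"
  proof (rule integral_cong_AE)
    show "(\<lambda>t. Fab a b t * Kker (Complex c t)) \<in> borel_measurable lborel" by measurable
    show "(\<lambda>t. \<integral>z. H t z \<partial>lborel) \<in> borel_measurable lborel"
      using lborel_pair.integrable_fst'[OF int] by auto
    have "AE t in lborel. t \<noteq> 0" by (rule AE_lborel_singleton)
    then show "AE t in lborel. Fab a b t * Kker (Complex c t) = (\<integral>z. H t z \<partial>lborel)"
      by eventually_elim (simp add: in_z)
  qed
  also have "\<dots> = (\<integral>z. \<integral>t. H t z \<partial>lborel \<partial>lborel)" by (rule F1[symmetric])
  also have "\<dots> = (\<integral>z. indicator {exp a..exp b} z *\<^sub>R (complex_of_real (z powr (c - 1)) * Ginv c z) \<partial>lborel)"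
    unfolding in_t A_def B_def ..
  finally show ?thesis .
qed

end


context cline
begin

definition RR where "RR z = complex_of_real (z powr (c - 1)) * (complex_of_real (Xi z) - Ginv c z / of_real (2 * pi))"

lemma RR_cont: "continuous_on {0<..} RR"
proof -
  have cX: "continuous_on {0<..} (\<lambda>z. complex_of_real (Xi z))"
    using Xi_cont by (intro continuous_intros)
  have cG: "continuous_on {0<..} (Ginv c)" by (rule Ginv_cont[OF c1 c0])
  show ?thesis unfolding RR_def
    by (intro continuous_intros cX cG) auto
qed

lemma RR_zero_int:
  assumes A0: "0 < A" and AB: "A \<le> B"
  shows "(\<integral>z. indicator {A..B} z *\<^sub>R RR z \<partial>lborel) = 0"
proof -
  define a b where "a = ln A" and "b = ln B"
  have ab: "a \<le> b" using A0 AB by (simp add: a_def b_def)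
  have eA: "exp a = A" and eB: "exp b = B" using A0 AB by (auto simp: a_def b_def)
  have kz: "complex_of_real kap \<noteq> 0" using kap_pos by simp
  define f1 where "f1 z = complex_of_real (z powr (c - 1) * Xi z)" for z
  define f2 where "f2 z = complex_of_real (z powr (c - 1)) * Ginv c z" for z
  have sub: "{A..B} \<subseteq> {0<..}" using A0 by auto
  have c1': "continuous_on {A..B} f1"
    unfolding f1_def using continuous_on_subset[OF Xi_cont sub] A0
    by (intro continuous_intros) auto
  have c2': "continuous_on {A..B} f2"
    unfolding f2_def using continuous_on_subset[OF Ginv_cont[OF c1 c0] sub] A0
    by (intro continuous_intros) auto
  have i1: "integrable lborel (\<lambda>z. indicator {A..B} z *\<^sub>R f1 z)"
    using borel_integrable_atLeastAtMost'[OF c1'] unfolding set_integrable_def .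
  have i2: "integrable lborel (\<lambda>z. indicator {A..B} z *\<^sub>R f2 z)"
    using borel_integrable_atLeastAtMost'[OF c2'] unfolding set_integrable_def .
  define I1 where "I1 = (\<integral>z. indicator {A..B} z *\<^sub>R f1 z \<partial>lborel)"
  define I2 where "I2 = (\<integral>z. indicator {A..B} z *\<^sub>R f2 z \<partial>lborel)"
  have m1: "complex_of_real (measure MM {a<..b}) = I1 / of_real kap"
  proof -
    have "complex_of_real (\<integral>z. indicator {A..B} z * (z powr (c - 1) * Xi z) \<partial>lborel) = I1"
      unfolding I1_def f1_def integral_complex_of_real[symmetric]
      by (rule arg_cong[where f = "integral\<^sup>L lborel"]) (auto simp: indicator_def)
    then show ?thesis using MM_interval[OF ab] unfolding eA eB by simp
  qed
  have m2: "complex_of_real (measure MM {a<..b}) = of_real (1 / (2 * pi)) * (I2 / of_real kap)"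
  proof -
    have "(CLBINT t. Fab a b t * (Kker (Complex c t) / of_real kap)) = (CLBINT t. Fab a b t * Kker (Complex c t)) / of_real kap"
      by (simp add: times_divide_eq_right)
    also have "\<dots> = I2 / of_real kap"
      unfolding Fub[OF ab] I2_def f2_def eA eB ..
    finally show ?thesis using Levy_full[OF ab] by simp
  qed
  have "I1 = I2 / of_real (2 * pi)"
    using m1 m2 kz by (simp add: field_simps)
  moreover have "(\<integral>z. indicator {A..B} z *\<^sub>R RR z \<partial>lborel) = I1 - I2 / of_real (2 * pi)"
  proof -
    have "(\<lambda>z. indicator {A..B} z *\<^sub>R RR z) = (\<lambda>z. indicator {A..B} z *\<^sub>R f1 z - (indicator {A..B} z *\<^sub>R f2 z) / of_real (2 * pi))"
      by (auto simp: RR_def f1_def f2_def indicator_def field_simps)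
    then show ?thesis unfolding I1_def I2_def using i1 i2 by simp
  qed
  ultimately show ?thesis by simp
qed

theorem Ginv_Xi:
  assumes z: "z > 0"
  shows "Ginv c z = of_real (2 * pi) * of_real (Xi z)"
proof -
  have "RR z = 0"
    by (rule zero_from_intervals[OF RR_cont RR_zero_int z]) auto
  moreover have "z powr (c - 1) \<noteq> 0" using z by simp
  ultimately have "complex_of_real (Xi z) = Ginv c z / of_real (2 * pi)"
    by (simp add: RR_def)
  then show ?thesis by (simp add: field_simps)
qed

end


theorem theorem1:
  fixes \<Phi> :: "real \<Rightarrow> complex" and c :: real
  assumes meas: "set_borel_measurable lborel {0<..} \<Phi>"
    and c_bounds: "-1 < c" "c < 0"
    and D0_fin: "set_integrable lborel {0<..} (\<lambda>y. \<Phi> y / complex_of_real y)"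
    and D0_nz: "D0 \<Phi> \<noteq> 0"
    and mom: "(\<integral>\<^sup>+ y\<in>{0<..}. ennreal (norm (\<Phi> y) * y powr (- c - 1)) \<partial>lborel) < \<infinity>"
  shows "(\<forall>s. Re s = c \<longrightarrow> mellin_abs_conv \<Phi> (- s))
       \<and> (\<forall>\<mu>>0. vline_integrable (\<lambda>s. Kker s * mellin \<Phi> (- s) * (complex_of_real \<mu>) powr (- s)) c)
       \<and> (\<forall>\<mu>>0. Sfun \<Phi> \<mu> =
             1 / (2 * of_real pi * \<i> * D0 \<Phi>) *
             vline_integral (\<lambda>s. Kker s * mellin \<Phi> (- s) * (complex_of_real \<mu>) powr (- s)) c)"
proof -
  interpret cline c using c_bounds by unfold_locales
  note [measurable] = Kline_meas[OF c_bounds]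
  have Phii[measurable]: "(\<lambda>x. indicator {0<..} x *\<^sub>R \<Phi> x) \<in> borel_measurable borel"
    using meas unfolding set_borel_measurable_def by simp
  define Mc where "Mc = (LBINT y:{0<..}. norm (\<Phi> y) * y powr (- c - 1))"
  have mint: "set_integrable lborel {0<..} (\<lambda>y. of_real y powr (- s - 1) * \<Phi> y)" if s: "Re s = c" for s
  proof -
    have eq: "(\<lambda>y. indicator {0<..} y *\<^sub>R (of_real y powr (- s - 1) * \<Phi> y)) = (\<lambda>y. of_real y powr (- s - 1) * (indicator {0<..} y *\<^sub>R \<Phi> y))"
      by (auto simp: indicator_def)
    have m: "(\<lambda>y. indicator {0<..} y *\<^sub>R (of_real y powr (- s - 1) * \<Phi> y)) \<in> borel_measurable lborel"
      unfolding eq by measurable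
    have "(\<integral>\<^sup>+ y. ennreal (norm (indicator {0<..} y *\<^sub>R (of_real y powr (- s - 1) * \<Phi> y))) \<partial>lborel)
        = (\<integral>\<^sup>+ y\<in>{0<..}. ennreal (norm (\<Phi> y) * y powr (- c - 1)) \<partial>lborel)"
      by (rule nn_integral_cong) (auto simp: indicator_def norm_mult norm_cpow_pos s mult.commute)
    then show ?thesis unfolding set_integrable_def using mom m by (intro integrableI_bounded) auto
  qed
  have normeq: "norm (of_real y powr (- s - 1) * \<Phi> y) = norm (\<Phi> y) * y powr (- c - 1)" if "Re s = c" "y > 0" for s y
    using that by (simp add: norm_mult norm_cpow_pos mult.commute)
  have mbound: "norm (mellin \<Phi> (- s)) \<le> Mc" if s: "Re s = c" for s
  proof -
    have "norm (mellin \<Phi> (- s)) \<le> (LBINT y:{0<..}. norm (of_real y powr (- s - 1) * \<Phi> y))"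
      unfolding mellin_def using set_integral_norm_bound[OF mint[OF s]] by simp
    also have "\<dots> = Mc" unfolding Mc_def
      by (rule set_lebesgue_integral_cong) (auto simp: normeq[OF s])
    finally show ?thesis .
  qed
  have partA: "\<forall>s. Re s = c \<longrightarrow> mellin_abs_conv \<Phi> (- s)"
    using mint by (simp add: mellin_abs_conv_def)
  have Mcint: "set_integrable lborel {0<..} (\<lambda>y. norm (\<Phi> y) * y powr (- c - 1))"
  proof -
    have "set_integrable lborel {0<..} (\<lambda>y. norm (of_real y powr (- of_real c - 1) * \<Phi> y))"
      using set_integrable_norm[OF mint[of "of_real c"]] by simp
    moreover have "set_integrable lborel {0<..} (\<lambda>y. norm (of_real y powr (- of_real c - 1) * \<Phi> y)) =
                   set_integrable lborel {0<..} (\<lambda>y. norm (\<Phi> y) * y powr (- c - 1))"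
      by (rule set_integrable_cong) (auto simp: normeq)
    ultimately show ?thesis by simp
  qed
  have main: "integrable lborel (\<lambda>t. Kker (Complex c t) * mellin \<Phi> (- Complex c t) * of_real \<mu> powr (- Complex c t))
     \<and> (\<integral>t. Kker (Complex c t) * mellin \<Phi> (- Complex c t) * of_real \<mu> powr (- Complex c t) \<partial>lborel)
        = of_real (2 * pi) * (LINT y:{0<..}|lborel. \<Phi> y / of_real y * of_real (Xi (\<mu> * y)))"
    if mu: "\<mu> > 0" for \<mu>
  proof -
    define H where "H t y = indicator {0<..} y *\<^sub>R (Kker (Complex c t) * (of_real y powr (- Complex c t - 1) * \<Phi> y) * of_real \<mu> powr (- Complex c t))" for t y
    have Hexp: "H t y = Kker (Complex c t) * exp ((- (of_real c + \<i> * of_real t) - 1) * of_real (ln y)) * (indicator {0<..} y *\<^sub>R \<Phi> y)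
        * exp (- (of_real c + \<i> * of_real t) * of_real (ln \<mu>))" for t y
      using mu by (cases "y > 0") (auto simp: H_def cpow_pos Complex_eq')
    have Hm: "(\<lambda>(t, y). H t y) \<in> borel_measurable (lborel \<Otimes>\<^sub>M lborel)"
      unfolding Hexp by measurable
    have Hfac: "H t y = (Kker (Complex c t) * of_real \<mu> powr (- Complex c t)) * (indicator {0<..} y *\<^sub>R (of_real y powr (- Complex c t - 1) * \<Phi> y))" for t y
      by (simp add: H_def indicator_def)
    have int: "integrable (lborel \<Otimes>\<^sub>M lborel) (\<lambda>(t, y). H t y)"
    proof (rule lborel_pair.Fubini_integrable[OF Hm])
      have "(\<lambda>t. \<integral>y. norm (case (t, y) of (t, y) \<Rightarrow> H t y) \<partial>lborel) = (\<lambda>t. (norm (Kker (Complex c t)) * \<mu> powr (- c)) * Mc)"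
      proof
        fix t
        have "(\<integral>y. norm (case (t, y) of (t, y) \<Rightarrow> H t y) \<partial>lborel) =
              (\<integral>y. (norm (Kker (Complex c t)) * \<mu> powr (- c)) * (indicator {0<..} y *\<^sub>R (norm (\<Phi> y) * y powr (- c - 1))) \<partial>lborel)"
        proof (rule Bochner_Integration.integral_cong[OF refl])
          fix y
          show "norm (case (t, y) of (t, y) \<Rightarrow> H t y) = (norm (Kker (Complex c t)) * \<mu> powr (- c)) * (indicator {0<..} y *\<^sub>R (norm (\<Phi> y) * y powr (- c - 1)))"
            using mu by (cases "y > 0") (auto simp: Hfac norm_mult norm_cpow_pos normeq)
        qed
        also have "\<dots> = (norm (Kker (Complex c t)) * \<mu> powr (- c)) * Mc"
          unfolding Mc_def set_lebesgue_integral_def by (rule integral_mult_right_zero)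
        finally show "(\<integral>y. norm (case (t, y) of (t, y) \<Rightarrow> H t y) \<partial>lborel) = (norm (Kker (Complex c t)) * \<mu> powr (- c)) * Mc" .
      qed
      then show "integrable lborel (\<lambda>t. \<integral>y. norm (case (t, y) of (t, y) \<Rightarrow> H t y) \<partial>lborel)"
        using K_int by simp
      show "AE t in lborel. integrable lborel (\<lambda>y. case (t, y) of (t, y) \<Rightarrow> H t y)"
      proof (rule AE_I2)
        fix t
        have ii: "integrable lborel (\<lambda>y. indicator {0<..} y *\<^sub>R (of_real y powr (- Complex c t - 1) * \<Phi> y))"
          using mint[of "Complex c t"] unfolding set_integrable_def by simp
        show "integrable lborel (\<lambda>y. case (t, y) of (t, y) \<Rightarrow> H t y)"
          by (simp only: case_prod_conv Hfac) (rule integrable_mult_right[OF ii])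
      qed
    qed
    have in_y: "(\<integral>y. H t y \<partial>lborel) = Kker (Complex c t) * mellin \<Phi> (- Complex c t) * of_real \<mu> powr (- Complex c t)" for t
      unfolding Hfac integral_mult_right_zero mellin_def set_lebesgue_integral_def by (simp add: mult_ac)
    have in_t: "(\<integral>t. H t y \<partial>lborel) = indicator {0<..} y *\<^sub>R (of_real (2 * pi) * (\<Phi> y / of_real y * of_real (Xi (\<mu> * y))))" for y
    proof (cases "y > 0")
      case True
      have my: "\<mu> * y > 0" using mu True by simp
      have "(\<integral>t. H t y \<partial>lborel) = (\<integral>t. (\<Phi> y / of_real y) * (Kker (Complex c t) * of_real (\<mu> * y) powr (- Complex c t)) \<partial>lborel)"
      proof (rule Bochner_Integration.integral_cong[OF refl])
        fix t
        have e: "complex_of_real y = exp (of_real (ln y))" using True by (simp add: exp_of_real)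
        have "of_real y powr (- Complex c t - 1) * of_real \<mu> powr (- Complex c t) = of_real (\<mu> * y) powr (- Complex c t) / of_real y"
          unfolding cpow_pos[OF True] cpow_pos[OF mu] cpow_pos[OF my]
          using True mu by (subst e) (simp add: ln_mult exp_add[symmetric] exp_diff[symmetric] algebra_simps)
        then show "H t y = (\<Phi> y / of_real y) * (Kker (Complex c t) * of_real (\<mu> * y) powr (- Complex c t))"
          using True by (simp add: H_def field_simps)
      qed
      also have "\<dots> = (\<Phi> y / of_real y) * Ginv c (\<mu> * y)"
        unfolding Ginv_def by (rule integral_mult_right_zero)
      also have "\<dots> = (\<Phi> y / of_real y) * (of_real (2 * pi) * of_real (Xi (\<mu> * y)))"
        using Ginv_Xi[OF my] by simp
      finally show ?thesis using True by simp
    qed (simp add: H_def)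
    have "integrable lborel (\<lambda>t. \<integral>y. H t y \<partial>lborel)"
      using lborel_pair.integrable_fst'[OF int] by simp
    then have I: "integrable lborel (\<lambda>t. Kker (Complex c t) * mellin \<Phi> (- Complex c t) * of_real \<mu> powr (- Complex c t))"
      unfolding in_y .
    have "(\<integral>t. Kker (Complex c t) * mellin \<Phi> (- Complex c t) * of_real \<mu> powr (- Complex c t) \<partial>lborel)
        = (\<integral>t. \<integral>y. H t y \<partial>lborel \<partial>lborel)" unfolding in_y ..
    also have "\<dots> = (\<integral>y. \<integral>t. H t y \<partial>lborel \<partial>lborel)"
      by (rule lborel_pair.Fubini_integral[OF int, symmetric])
    also have "\<dots> = (\<integral>y. indicator {0<..} y *\<^sub>R (of_real (2 * pi) * (\<Phi> y / of_real y * of_real (Xi (\<mu> * y)))) \<partial>lborel)"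
      unfolding in_t ..
    also have "\<dots> = of_real (2 * pi) * (LINT y:{0<..}|lborel. \<Phi> y / of_real y * of_real (Xi (\<mu> * y)))"
      unfolding set_lebesgue_integral_def
      by (subst integral_mult_right_zero[symmetric]) (simp add: indicator_def)
    finally show ?thesis using I by simp
  qed
  have partB: "\<forall>\<mu>>0. vline_integrable (\<lambda>s. Kker s * mellin \<Phi> (- s) * (complex_of_real \<mu>) powr (- s)) c"
    using main by (simp add: vline_integrable_def)
  have partC: "\<forall>\<mu>>0. Sfun \<Phi> \<mu> =
             1 / (2 * of_real pi * \<i> * D0 \<Phi>) *
             vline_integral (\<lambda>s. Kker s * mellin \<Phi> (- s) * (complex_of_real \<mu>) powr (- s)) c"
  proof (intro allI impI)
    fix \<mu> :: real assume mu: "\<mu> > 0"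
    define S where "S = (LINT y:{0<..}|lborel. \<Phi> y / of_real y * of_real (Xi (\<mu> * y)))"
    have "vline_integral (\<lambda>s. Kker s * mellin \<Phi> (- s) * (complex_of_real \<mu>) powr (- s)) c = \<i> * (of_real (2 * pi) * S)"
      using main[OF mu] by (simp add: vline_integral_def S_def)
    then show "Sfun \<Phi> \<mu> = 1 / (2 * of_real pi * \<i> * D0 \<Phi>) *
             vline_integral (\<lambda>s. Kker s * mellin \<Phi> (- s) * (complex_of_real \<mu>) powr (- s)) c"
      using D0_nz by (simp add: Sfun_def S_def field_simps)
  qed
  show ?thesis using partA partB partC by blast
qed


end
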